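(* Let $\mathcal C$ be a subspace of $\mathcal H=\mathcal H_A\otimes\mathcal H_B$ with encoding isometry $\mathcal E:\mathcal L\to\mathcal C$ from a logical space $\mathcal L$ onto $\mathcal C$. Consider the following experiment: (1) a party chooses an arbitrary joint state of the logical system $\mathcal L$ and an auxiliary system $\mathrm{Aux}$ (of arbitrary finite dimension); (2) $\mathcal L$ is encoded with $\mathcal E$; (3) the party applies an arbitrary operation acting only on $\mathrm{Aux}$ and on the components in $\mathcal H_B$ of the encoding; (4) $\mathrm{Aux}$ is traced out. The set of possible resulting states of $\mathcal H$ (the corrupted codeword) is exactly $ST_B(\mathcal C)$.
   Context: A mixed state $\rho'$ is "in" $\mathcal C$ if $\mathrm{Tr}(P_{\mathcal C}\rho')=1$, where $P_{\mathcal C}$ is the projector onto $\mathcal C$. $ST_B(\mathcal C)=\{\rho:\exists\rho'\text{ in }\mathcal C,\ \mathrm{Tr}_B(\rho)=\mathrm{Tr}_B(\rho')\}$. *)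

theory Defs
  imports Complex_Main "Jordan_Normal_Form.Matrix"
begin

(* Finite-dimensional quantum mechanics with complex matrices (Jordan_Normal_Form.Matrix).
   A bipartite space C^m (x) C^d is C^(m*d) with basis index (i,k) |-> i*d + k. *)

definition adj :: "complex mat \<Rightarrow> complex mat" where
  "adj A = mat (dim_col A) (dim_row A) (\<lambda>(i,j). cnj (A $$ (j,i)))"

definition kron :: "complex mat \<Rightarrow> complex mat \<Rightarrow> complex mat" where
  "kron A B = mat (dim_row A * dim_row B) (dim_col A * dim_col B)
     (\<lambda>(i,j). A $$ (i div dim_row B, j div dim_col B) * B $$ (i mod dim_row B, j mod dim_col B))"

definition tr :: "complex mat \<Rightarrow> complex" where
  "tr A = (\<Sum>i<dim_row A. A $$ (i,i))"

definition ptrace2 :: "nat \<Rightarrow> complex mat \<Rightarrow> complex mat" where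
  "ptrace2 d M = mat (dim_row M div d) (dim_col M div d)
     (\<lambda>(i,j). \<Sum>k<d. M $$ (i*d+k, j*d+k))"

definition psd :: "nat \<Rightarrow> complex mat \<Rightarrow> bool" where
  "psd n A \<longleftrightarrow> A \<in> carrier_mat n n \<and>
     (\<forall>v \<in> carrier_vec n. let z = (\<Sum>i<n. cnj (v $ i) * (A *\<^sub>v v) $ i) in Im z = 0 \<and> 0 \<le> Re z)"

definition density :: "nat \<Rightarrow> complex mat \<Rightarrow> bool" where
  "density n \<rho> \<longleftrightarrow> \<rho> \<in> carrier_mat n n \<and> adj \<rho> = \<rho> \<and> psd n \<rho> \<and> tr \<rho> = 1"

definition msum :: "nat \<Rightarrow> complex mat list \<Rightarrow> complex mat" where
  "msum n Ms = mat n n (\<lambda>(i,j). \<Sum>M\<leftarrow>Ms. M $$ (i,j))"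

definition kraus :: "nat \<Rightarrow> complex mat list \<Rightarrow> bool" where
  "kraus n Ks \<longleftrightarrow> (\<forall>K \<in> set Ks. K \<in> carrier_mat n n) \<and> msum n (map (\<lambda>K. adj K * K) Ks) = 1\<^sub>m n"

definition apply_kraus :: "nat \<Rightarrow> complex mat list \<Rightarrow> complex mat \<Rightarrow> complex mat" where
  "apply_kraus n Ks \<rho> = msum n (map (\<lambda>K. K * \<rho> * adj K) Ks)"

definition orth_proj :: "nat \<Rightarrow> complex mat \<Rightarrow> bool" where
  "orth_proj n P \<longleftrightarrow> P \<in> carrier_mat n n \<and> adj P = P \<and> P * P = P"

definition state_in :: "nat \<Rightarrow> complex mat \<Rightarrow> complex mat \<Rightarrow> bool" where
  "state_in n PC \<rho>' \<longleftrightarrow> density n \<rho>' \<and> tr (PC * \<rho>') = 1"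

text \<open>ST_B(C) for H = H_A (x) H_B, dim H_A = dA, dim H_B = dB, PC the projector onto C.\<close>
definition ST_B :: "nat \<Rightarrow> nat \<Rightarrow> complex mat \<Rightarrow> complex mat set" where
  "ST_B dA dB PC = {\<rho>. density (dA*dB) \<rho> \<and>
     (\<exists>\<rho>'. state_in (dA*dB) PC \<rho>' \<and> ptrace2 dB \<rho> = ptrace2 dB \<rho>')}"

text \<open>Outcome of the experiment: sigma on L (x) Aux (dim Aux = dX), encode with E (x) I,
  apply the operation I_A (x) Phi with Phi a quantum operation on H_B (x) Aux, trace out Aux.\<close>
definition experiment_outcome ::
  "nat \<Rightarrow> complex mat \<Rightarrow> nat \<Rightarrow> complex mat \<Rightarrow> complex mat list \<Rightarrow> complex mat" where
  "experiment_outcome dA E dX \<sigma> Ks =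
     (let enc = kron E (1\<^sub>m dX) * \<sigma> * adj (kron E (1\<^sub>m dX)) in
      ptrace2 dX (apply_kraus (dim_row E * dX) (map (\<lambda>K. kron (1\<^sub>m dA) K) Ks) enc))"

end

theory Submission
  imports Defs
begin

definition ip :: "complex vec \<Rightarrow> complex vec \<Rightarrow> complex" where
  "ip x y = (\<Sum>i<dim_vec x. x $ i * cnj (y $ i))"

definition outer :: "complex vec \<Rightarrow> complex vec \<Rightarrow> complex mat" where
  "outer x y = mat (dim_vec x) (dim_vec y) (\<lambda>(i,j). x $ i * cnj (y $ j))"

lemma dim_adj[simp]: "dim_row (adj A) = dim_col A" "dim_col (adj A) = dim_row A"
  by (auto simp: adj_def)

lemma adj_carrier[simp]: "A \<in> carrier_mat n m \<Longrightarrow> adj A \<in> carrier_mat m n"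
  by (auto simp: adj_def)

lemma index_adj[simp]: "i < dim_col A \<Longrightarrow> j < dim_row A \<Longrightarrow> adj A $$ (i,j) = cnj (A $$ (j,i))"
  by (auto simp: adj_def)

lemma adj_adj[simp]: "adj (adj A) = A"
  by (rule eq_matI) auto

lemma adj_mult: assumes "A \<in> carrier_mat n m" "B \<in> carrier_mat m p"
  shows "adj (A * B) = adj B * adj A"
  using assms by (intro eq_matI) (auto simp: scalar_prod_def mult.commute)

lemma adj_add: assumes "A \<in> carrier_mat n m" "B \<in> carrier_mat n m"
  shows "adj (A + B) = adj A + adj B"
  using assms by (intro eq_matI) auto

lemma adj_minus: assumes "A \<in> carrier_mat n m" "B \<in> carrier_mat n m"
  shows "adj (A - B) = adj A - adj B"
  using assms by (intro eq_matI) auto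

lemma adj_one[simp]: "adj (1\<^sub>m n) = 1\<^sub>m n"
  by (intro eq_matI) auto

lemma adj_zero[simp]: "adj (0\<^sub>m n m) = 0\<^sub>m m n"
  by (intro eq_matI) auto

lemma adj_smult: "adj (c \<cdot>\<^sub>m A) = cnj c \<cdot>\<^sub>m adj A"
  by (intro eq_matI) auto

lemma ip_adj: assumes A: "A \<in> carrier_mat n m" and x: "x \<in> carrier_vec m" and y: "y \<in> carrier_vec n"
  shows "ip (A *\<^sub>v x) y = ip x (adj A *\<^sub>v y)"
proof -
  have "ip (A *\<^sub>v x) y = (\<Sum>i<n. (\<Sum>j<m. A $$ (i,j) * x $ j) * cnj (y $ i))"
    using assms by (simp add: ip_def scalar_prod_def atLeast0LessThan)
  also have "\<dots> = (\<Sum>j<m. x $ j * (\<Sum>i<n. A $$ (i,j) * cnj (y $ i)))"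
    by (simp add: sum_distrib_left sum_distrib_right sum.swap[of _ "{..<n}"] mult_ac)
  also have "\<dots> = ip x (adj A *\<^sub>v y)"
    using assms by (simp add: ip_def scalar_prod_def atLeast0LessThan mult_ac)
  finally show ?thesis .
qed

lemma ip_cnj: "dim_vec x = dim_vec y \<Longrightarrow> cnj (ip x y) = ip y x"
  by (simp add: ip_def mult.commute)

lemma ip_add_left: "x \<in> carrier_vec n \<Longrightarrow> y \<in> carrier_vec n \<Longrightarrow> ip (x + y) z = ip x z + ip y z"
  by (auto simp: ip_def algebra_simps sum.distrib)

lemma ip_add_right: "x \<in> carrier_vec n \<Longrightarrow> y \<in> carrier_vec n \<Longrightarrow> z \<in> carrier_vec n \<Longrightarrow> ip z (x + y) = ip z x + ip z y"
  by (auto simp: ip_def algebra_simps sum.distrib)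

lemma ip_minus_left: "x \<in> carrier_vec n \<Longrightarrow> y \<in> carrier_vec n \<Longrightarrow> ip (x - y) z = ip x z - ip y z"
  by (auto simp: ip_def algebra_simps sum_subtractf)

lemma ip_minus_right: "x \<in> carrier_vec n \<Longrightarrow> y \<in> carrier_vec n \<Longrightarrow> z \<in> carrier_vec n \<Longrightarrow> ip z (x - y) = ip z x - ip z y"
  by (auto simp: ip_def algebra_simps sum_subtractf)

lemma ip_smult_left: "ip (c \<cdot>\<^sub>v x) z = c * ip x z"
  by (auto simp: ip_def algebra_simps sum_distrib_left)

lemma ip_smult_right: "z \<in> carrier_vec n \<Longrightarrow> x \<in> carrier_vec n \<Longrightarrow> ip z (c \<cdot>\<^sub>v x) = cnj c * ip z x"
  by (auto simp: ip_def algebra_simps sum_distrib_left)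

lemma ip_zero_right[simp]: "z \<in> carrier_vec n \<Longrightarrow> ip z (0\<^sub>v n) = 0"
  by (auto simp: ip_def)

lemma ip_zero_left[simp]: "ip (0\<^sub>v n) z = 0"
  by (auto simp: ip_def)

lemma ip_self: "ip x x = of_real (\<Sum>i<dim_vec x. (cmod (x $ i))\<^sup>2)"
  unfolding ip_def of_real_sum by (intro sum.cong refl) (simp add: complex_norm_square del: of_real_power)

lemma ip_self_eq_0: assumes "x \<in> carrier_vec n" shows "ip x x = 0 \<longleftrightarrow> x = 0\<^sub>v n"
proof
  assume "ip x x = 0"
  hence "(\<Sum>i<dim_vec x. (cmod (x $ i))\<^sup>2) = 0" by (metis ip_self of_real_eq_0_iff)
  hence "\<forall>i\<in>{..<dim_vec x}. (cmod (x $ i))\<^sup>2 = 0"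
    by (subst sum_nonneg_eq_0_iff[symmetric]) auto
  thus "x = 0\<^sub>v n" using assms by (intro eq_vecI) auto
qed (auto simp: ip_def)

lemma ip_self_Re_nonneg: "0 \<le> Re (ip x x)"
  unfolding ip_self by (simp add: sum_nonneg)

lemma ip_self_real: "Im (ip x x) = 0"
  unfolding ip_self by simp

lemma outer_carrier[simp]: "outer x y \<in> carrier_mat (dim_vec x) (dim_vec y)"
  by (simp add: outer_def)

lemma dim_outer[simp]: "dim_row (outer x y) = dim_vec x" "dim_col (outer x y) = dim_vec y"
  by (auto simp: outer_def)

lemma index_outer[simp]: "i < dim_vec x \<Longrightarrow> j < dim_vec y \<Longrightarrow> outer x y $$ (i,j) = x $ i * cnj (y $ j)"
  by (simp add: outer_def)

lemma outer_mult_vec: assumes "z \<in> carrier_vec (dim_vec y)"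
  shows "outer x y *\<^sub>v z = ip z y \<cdot>\<^sub>v x"
  using assms by (intro eq_vecI) (auto simp: ip_def scalar_prod_def atLeast0LessThan sum_distrib_left mult_ac)

lemma adj_outer[simp]: "adj (outer x y) = outer y x"
  by (intro eq_matI) auto

lemma mult_outer: assumes "A \<in> carrier_mat n m" "x \<in> carrier_vec m"
  shows "A * outer x y = outer (A *\<^sub>v x) y"
  using assms by (intro eq_matI) (auto simp: scalar_prod_def sum_distrib_right sum_distrib_left mult_ac)

lemma outer_mult: assumes "y \<in> carrier_vec m" "A \<in> carrier_mat m p"
  shows "outer x y * A = outer x (adj A *\<^sub>v y)"
  using assms by (intro eq_matI) (auto simp: scalar_prod_def sum_distrib_left mult_ac)

lemma outer_outer: assumes "y \<in> carrier_vec m" "z \<in> carrier_vec m"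
  shows "outer x y * outer z w = ip z y \<cdot>\<^sub>m outer x w"
  using assms by (intro eq_matI) (auto simp: scalar_prod_def ip_def atLeast0LessThan sum_distrib_left sum_distrib_right mult_ac)


lemma mat_eq_vecI: fixes A B :: "complex mat" assumes A: "A \<in> carrier_mat n m" and B: "B \<in> carrier_mat n m"
  and eq: "\<And>x. x \<in> carrier_vec m \<Longrightarrow> A *\<^sub>v x = B *\<^sub>v x"
  shows "A = B"
proof (rule eq_matI)
  fix i j assume i: "i < dim_row B" and j: "j < dim_col B"
  have "\<And>C :: complex mat. C \<in> carrier_mat n m \<Longrightarrow> i < n \<Longrightarrow> j < m \<Longrightarrow> (C *\<^sub>v unit_vec m j) $ i = C $$ (i,j)"
    by (auto simp: scalar_prod_def unit_vec_def if_distrib cong: if_cong)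
  then show "A $$ (i,j) = B $$ (i,j)" using eq[of "unit_vec m j"] A B i j by (metis carrier_matD unit_vec_carrier)
qed (use A B in auto)

lemma smult_mat_vec: "A \<in> carrier_mat n m \<Longrightarrow> x \<in> carrier_vec m \<Longrightarrow> (c \<cdot>\<^sub>m (A::complex mat)) *\<^sub>v x = c \<cdot>\<^sub>v (A *\<^sub>v x)"
  by (intro eq_vecI) (auto simp: scalar_prod_def sum_distrib_left mult_ac)

lemma add_zero_smult_vec[simp]: "dim_vec v = dim_vec (w::complex vec) \<Longrightarrow> w + 0 \<cdot>\<^sub>v v = w"
  by (intro eq_vecI) auto

lemma smult_zero_vec'[simp]: "(c::complex) \<cdot>\<^sub>v 0\<^sub>v n = 0\<^sub>v n"
  by (intro eq_vecI) auto

lemma add_zero_vec'[simp]: "dim_vec (w::complex vec) = n \<Longrightarrow> w + 0\<^sub>v n = w"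
  by (intro eq_vecI) auto

lemma partial_isometry:
  fixes \<phi> \<psi> :: "nat \<Rightarrow> complex vec"
  assumes "\<And>a. a < m \<Longrightarrow> \<phi> a \<in> carrier_vec N" "\<And>a. a < m \<Longrightarrow> \<psi> a \<in> carrier_vec N"
    and "\<And>a b. a < m \<Longrightarrow> b < m \<Longrightarrow> ip (\<phi> a) (\<phi> b) = ip (\<psi> a) (\<psi> b)"
  shows "\<exists>K \<in> carrier_mat N N. (\<forall>a<m. K *\<^sub>v \<phi> a = \<psi> a) \<and>
     adj K * K * (adj K * K) = adj K * K \<and> (\<forall>a<m. (adj K * K) *\<^sub>v \<phi> a = \<phi> a) \<and>
     (\<forall>y\<in>carrier_vec N. (\<forall>a<m. ip y (\<psi> a) = 0) \<longrightarrow> adj K *\<^sub>v y = 0\<^sub>v N)"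
  using assms
proof (induction m)
  case 0
  show ?case by (rule bexI[of _ "0\<^sub>m N N"]) (auto intro!: eq_vecI)
next
  case (Suc m)
  have "\<exists>K \<in> carrier_mat N N. (\<forall>a<m. K *\<^sub>v \<phi> a = \<psi> a) \<and>
     adj K * K * (adj K * K) = adj K * K \<and> (\<forall>a<m. (adj K * K) *\<^sub>v \<phi> a = \<phi> a) \<and>
     (\<forall>y\<in>carrier_vec N. (\<forall>a<m. ip y (\<psi> a) = 0) \<longrightarrow> adj K *\<^sub>v y = 0\<^sub>v N)"
    by (rule Suc.IH) (use Suc.prems in auto)
  then obtain K where K: "K \<in> carrier_mat N N" and Kphi: "\<forall>a<m. K *\<^sub>v \<phi> a = \<psi> a"
    and proj: "adj K * K * (adj K * K) = adj K * K" and Pphi: "\<forall>a<m. (adj K * K) *\<^sub>v \<phi> a = \<phi> a"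
    and ran: "\<forall>y\<in>carrier_vec N. (\<forall>a<m. ip y (\<psi> a) = 0) \<longrightarrow> adj K *\<^sub>v y = 0\<^sub>v N"
    by blast
  have phi: "\<And>a. a < Suc m \<Longrightarrow> \<phi> a \<in> carrier_vec N" and psi: "\<And>a. a < Suc m \<Longrightarrow> \<psi> a \<in> carrier_vec N"
    using Suc.prems by auto
  have gram: "\<And>a b. a < Suc m \<Longrightarrow> b < Suc m \<Longrightarrow> ip (\<phi> a) (\<phi> b) = ip (\<psi> a) (\<psi> b)"
    using Suc.prems by auto
  define P where "P = adj K * K"
  have aK: "adj K \<in> carrier_mat N N" using K by simp
  have P: "P \<in> carrier_mat N N" using K by (metis P_def adj_carrier mult_carrier_mat)
  have adjP: "adj P = P" using K by (simp add: P_def adj_mult[OF aK K])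
  have PP: "P * P = P" using proj by (simp add: P_def)
  have Pv: "\<And>x. x \<in> carrier_vec N \<Longrightarrow> P *\<^sub>v x = adj K *\<^sub>v (K *\<^sub>v x)"
    using assoc_mult_mat_vec[OF aK K] by (simp add: P_def)
  have PPv: "\<And>x. x \<in> carrier_vec N \<Longrightarrow> P *\<^sub>v (P *\<^sub>v x) = P *\<^sub>v x"
    using P PP by (metis assoc_mult_mat_vec)
  have ipP: "\<And>x y. x \<in> carrier_vec N \<Longrightarrow> y \<in> carrier_vec N \<Longrightarrow> ip (P *\<^sub>v x) y = ip x (P *\<^sub>v y)"
    using ip_adj[OF P] adjP by simp
  have ipK: "\<And>x y. x \<in> carrier_vec N \<Longrightarrow> y \<in> carrier_vec N \<Longrightarrow> ip (K *\<^sub>v x) y = ip x (adj K *\<^sub>v y)"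
    using ip_adj[OF K] by simp
  define f where "f = \<phi> m"
  define g where "g = \<psi> m"
  have f: "f \<in> carrier_vec N" and g: "g \<in> carrier_vec N" using phi psi by (auto simp: f_def g_def)
  define r where "r = f - P *\<^sub>v f"
  define s where "s = g - K *\<^sub>v f"
  have r: "r \<in> carrier_vec N" and s: "s \<in> carrier_vec N" using f g P K by (auto simp: r_def s_def)
  have Pf: "P *\<^sub>v f \<in> carrier_vec N" and Kf: "K *\<^sub>v f \<in> carrier_vec N" using P K f by auto
  have r_orth: "ip (\<phi> a) r = 0" if a: "a < m" for a
  proof -
    have "ip (\<phi> a) r = ip (\<phi> a) f - ip (\<phi> a) (P *\<^sub>v f)"
      unfolding r_def using ip_minus_right[OF f Pf phi] a by simp
    also have "ip (\<phi> a) (P *\<^sub>v f) = ip (P *\<^sub>v \<phi> a) f" using ipP[OF phi f] a by simp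
    also have "P *\<^sub>v \<phi> a = \<phi> a" using Pphi a by (simp add: P_def)
    finally show ?thesis by simp
  qed
  have Pr: "P *\<^sub>v r = 0\<^sub>v N"
    unfolding r_def using P f Pf PPv[OF f] by (simp add: mult_minus_distrib_mat_vec)
  have s_orth: "ip (\<psi> a) s = 0" if a: "a < m" for a
  proof -
    have "ip (\<psi> a) s = ip (\<psi> a) g - ip (\<psi> a) (K *\<^sub>v f)"
      unfolding s_def using ip_minus_right[OF g Kf psi] a by simp
    also have "ip (\<psi> a) (K *\<^sub>v f) = ip (K *\<^sub>v \<phi> a) (K *\<^sub>v f)" using Kphi a by simp
    also have "\<dots> = ip (\<phi> a) (P *\<^sub>v f)" using ipK[OF phi Kf] a Pv[OF f] by simp
    also have "\<dots> = ip (\<phi> a) f"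
      using r_orth[OF a] ip_minus_right[OF f Pf phi[of a]] a unfolding r_def by simp
    also have "\<dots> = ip (\<psi> a) g" using gram[of a m] a by (simp add: f_def g_def)
    finally show ?thesis by simp
  qed
  have Ks: "adj K *\<^sub>v s = 0\<^sub>v N"
    using ran s s_orth ip_cnj psi s by (metis carrier_vecD complex_cnj_zero less_SucI)
  have ipKfs: "ip (K *\<^sub>v f) s = 0" using ipK[OF f s] Ks f by simp
  have g_eq: "g = s + K *\<^sub>v f" unfolding s_def using g Kf K by (intro eq_vecI) auto
  have f_eq: "f = r + P *\<^sub>v f" unfolding r_def using f Pf P by (intro eq_vecI) auto
  have ss: "ip s s = ip g g - ip f (P *\<^sub>v f)"
  proof -
    have "ip g s = ip s s + ip (K *\<^sub>v f) s" using g_eq ip_add_left[OF s Kf] by simp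
    hence 1: "ip s s = ip g s" using ipKfs by simp
    have "ip g (K *\<^sub>v f) = cnj (ip (K *\<^sub>v f) g)" using ip_cnj g Kf by (metis carrier_vecD)
    also have "ip (K *\<^sub>v f) g = ip (K *\<^sub>v f) s + ip (K *\<^sub>v f) (K *\<^sub>v f)"
      using g_eq ip_add_right[OF s Kf Kf] by simp
    also have "ip (K *\<^sub>v f) (K *\<^sub>v f) = ip f (P *\<^sub>v f)" using ipK[OF f Kf] Pv[OF f] by simp
    also have "cnj (ip (K *\<^sub>v f) s + ip f (P *\<^sub>v f)) = ip f (P *\<^sub>v f)"
      using ipKfs ip_cnj[of f "P *\<^sub>v f"] ipP[OF f f] f Pf P by simp
    finally have 2: "ip g (K *\<^sub>v f) = ip f (P *\<^sub>v f)" .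
    have "ip g s = ip g g - ip g (K *\<^sub>v f)" unfolding s_def using ip_minus_right[OF g Kf g] .
    thus ?thesis using 1 2 by simp
  qed
  have rr: "ip r r = ip f f - ip f (P *\<^sub>v f)"
  proof -
    have "ip (P *\<^sub>v f) r = 0" using ipP[OF f r] Pr f by simp
    hence "ip r r = ip f r" using f_eq ip_add_left[OF r Pf, of r] by simp
    also have "\<dots> = ip f f - ip f (P *\<^sub>v f)" unfolding r_def using ip_minus_right[OF f Pf f] .
    finally show ?thesis .
  qed
  have rr_ss: "ip r r = ip s s" using rr ss gram[of m m] by (simp add: f_def g_def)
  show ?case
  proof (cases "ip r r = 0")
    case True
    hence r0: "r = 0\<^sub>v N" and s0: "s = 0\<^sub>v N" using ip_self_eq_0 r s rr_ss by auto
    have Kf_eq: "K *\<^sub>v f = g" using s0 g_eq Kf by auto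
    have Pf_eq: "P *\<^sub>v f = f" using r0 f_eq Pf by auto
    show ?thesis
    proof (intro bexI[OF _ K] conjI allI impI ballI)
      fix a assume "a < Suc m" thus "K *\<^sub>v \<phi> a = \<psi> a" using Kphi Kf_eq
        by (metis f_def g_def less_antisym)
    next
      show "adj K * K * (adj K * K) = adj K * K" by fact
    next
      fix a assume "a < Suc m" thus "adj K * K *\<^sub>v \<phi> a = \<phi> a" using Pphi Pf_eq
        by (metis P_def f_def less_antisym)
    next
      fix y :: "complex vec" assume "y \<in> carrier_vec N" "\<forall>a<Suc m. ip y (\<psi> a) = 0"
      thus "adj K *\<^sub>v y = 0\<^sub>v N" using ran by auto
    qed
  next
    case False
    define c where "c = ip r r"
    define d where "d = 1 / c"
    have c0: "c \<noteq> 0" using False by (simp add: c_def)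
    have cd: "d * c = 1" using c0 by (simp add: d_def)
    have cnjd: "cnj d = d"
    proof -
      have "Im c = 0" unfolding c_def by (rule ip_self_real)
      hence "cnj c = c" by (simp add: complex_eq_iff)
      thus ?thesis by (simp add: d_def)
    qed
    have ss_c: "ip s s = c" using rr_ss by (simp add: c_def)
    define K' where "K' = K + d \<cdot>\<^sub>m outer s r"
    have osr: "outer s r \<in> carrier_mat N N" using outer_carrier[of s r] r s by simp
    have ors: "outer r s \<in> carrier_mat N N" using outer_carrier[of r s] r s by simp
    have K': "K' \<in> carrier_mat N N" using K osr by (simp add: K'_def)
    have aK': "adj K' = adj K + d \<cdot>\<^sub>m outer r s"
      unfolding K'_def using adj_add[OF K, of "d \<cdot>\<^sub>m outer s r"] osr by (simp add: adj_smult cnjd)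
    have K'v: "K' *\<^sub>v x = K *\<^sub>v x + (d * ip x r) \<cdot>\<^sub>v s" if x: "x \<in> carrier_vec N" for x
      unfolding K'_def using x K osr r
      by (simp add: add_mult_distrib_mat_vec[OF K _ x] smult_mat_vec outer_mult_vec smult_smult_assoc)
    have aK'v: "adj K' *\<^sub>v y = adj K *\<^sub>v y + (d * ip y s) \<cdot>\<^sub>v r" if y: "y \<in> carrier_vec N" for y
      unfolding aK' using y aK ors s
      by (simp add: add_mult_distrib_mat_vec[OF aK _ y] smult_mat_vec outer_mult_vec smult_smult_assoc)
    have ipfr: "ip f r = c"
    proof -
      have "ip (P *\<^sub>v f) r = 0" using ipP[OF f r] Pr r f by simp
      thus ?thesis using f_eq ip_add_left[OF r Pf, of r] by (simp add: c_def)
    qed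
    have K'phi: "K' *\<^sub>v \<phi> a = \<psi> a" if a: "a < Suc m" for a
    proof (cases "a < m")
      case True
      thus ?thesis using K'v[OF phi[OF a]] r_orth[OF True] Kphi s K phi[OF a] psi[OF a] by simp
    next
      case False
      hence am: "a = m" using a by simp
      have "K' *\<^sub>v f = K *\<^sub>v f + s" using K'v[OF f] ipfr cd by simp
      also have "\<dots> = g" using g_eq s Kf by (simp add: comm_add_vec)
      finally show ?thesis by (simp add: am f_def g_def)
    qed
    define P' where "P' = adj K' * K'"
    have aK'c: "adj K' \<in> carrier_mat N N" using K' by simp
    have P': "P' \<in> carrier_mat N N" using K' by (metis P'_def adj_carrier mult_carrier_mat)
    have P'v: "P' *\<^sub>v x = P *\<^sub>v x + (d * ip x r) \<cdot>\<^sub>v r" if x: "x \<in> carrier_vec N" for x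
    proof -
      define \<alpha> where "\<alpha> = d * ip x r"
      have Kx: "K *\<^sub>v x \<in> carrier_vec N" using K x by simp
      have as: "\<alpha> \<cdot>\<^sub>v s \<in> carrier_vec N" using s by simp
      have "P' *\<^sub>v x = adj K' *\<^sub>v (K' *\<^sub>v x)" unfolding P'_def using assoc_mult_mat_vec[OF aK'c K' x] .
      also have "K' *\<^sub>v x = K *\<^sub>v x + \<alpha> \<cdot>\<^sub>v s" using K'v[OF x] by (simp add: \<alpha>_def)
      also have "adj K' *\<^sub>v (K *\<^sub>v x + \<alpha> \<cdot>\<^sub>v s) = adj K *\<^sub>v (K *\<^sub>v x + \<alpha> \<cdot>\<^sub>v s) + (d * ip (K *\<^sub>v x + \<alpha> \<cdot>\<^sub>v s) s) \<cdot>\<^sub>v r"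
        using aK'v Kx as by simp
      also have "adj K *\<^sub>v (K *\<^sub>v x + \<alpha> \<cdot>\<^sub>v s) = P *\<^sub>v x"
        using mult_add_distrib_mat_vec[OF aK Kx as] mult_mat_vec[OF aK s] Ks Pv[OF x] aK x K
        by simp
      also have "ip (K *\<^sub>v x + \<alpha> \<cdot>\<^sub>v s) s = \<alpha> * c"
        using ip_add_left[OF Kx as] ip_smult_left ipK[OF x s] Ks ss_c x by simp
      also have "d * (\<alpha> * c) = \<alpha>" using cd by (simp add: mult_ac)
      finally show ?thesis by (simp add: \<alpha>_def)
    qed
    show ?thesis
    proof (intro bexI[OF _ K'] conjI allI impI ballI)
      fix a assume "a < Suc m" thus "K' *\<^sub>v \<phi> a = \<psi> a" by (rule K'phi)
    next
      show "adj K' * K' * (adj K' * K') = adj K' * K'"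
        unfolding P'_def[symmetric]
      proof (rule mat_eq_vecI[of _ N N])
        show "P' * P' \<in> carrier_mat N N" using P' by simp
        show "P' \<in> carrier_mat N N" by fact
        fix x :: "complex vec" assume x: "x \<in> carrier_vec N"
        define \<alpha> where "\<alpha> = d * ip x r"
        have Px: "P *\<^sub>v x \<in> carrier_vec N" using P x by simp
        have ar: "\<alpha> \<cdot>\<^sub>v r \<in> carrier_vec N" using r by simp
        have "P' * P' *\<^sub>v x = P' *\<^sub>v (P' *\<^sub>v x)" using assoc_mult_mat_vec[OF P' P' x] .
        also have "P' *\<^sub>v x = P *\<^sub>v x + \<alpha> \<cdot>\<^sub>v r" using P'v[OF x] by (simp add: \<alpha>_def)
        also have "P' *\<^sub>v (P *\<^sub>v x + \<alpha> \<cdot>\<^sub>v r) = P *\<^sub>v (P *\<^sub>v x + \<alpha> \<cdot>\<^sub>v r) + (d * ip (P *\<^sub>v x + \<alpha> \<cdot>\<^sub>v r) r) \<cdot>\<^sub>v r"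
          using P'v Px ar by simp
        also have "P *\<^sub>v (P *\<^sub>v x + \<alpha> \<cdot>\<^sub>v r) = P *\<^sub>v x"
          using mult_add_distrib_mat_vec[OF P Px ar] mult_mat_vec[OF P r] Pr PPv[OF x] P x by simp
        also have "ip (P *\<^sub>v x + \<alpha> \<cdot>\<^sub>v r) r = \<alpha> * c"
          using ip_add_left[OF Px ar] ip_smult_left ipP[OF x r] Pr x by (simp add: c_def)
        also have "d * (\<alpha> * c) = \<alpha>" using cd by (simp add: mult_ac)
        finally show "P' * P' *\<^sub>v x = P' *\<^sub>v x" using P'v[OF x] by (simp add: \<alpha>_def)
      qed
    next
      fix a assume a: "a < Suc m"
      show "adj K' * K' *\<^sub>v \<phi> a = \<phi> a"
        unfolding P'_def[symmetric]
      proof (cases "a < m")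
        case True
        thus "P' *\<^sub>v \<phi> a = \<phi> a" using P'v[OF phi[OF a]] r_orth[OF True] Pphi r phi[OF a]
          by (simp add: P_def)
      next
        case False
        hence am: "a = m" using a by simp
        have "P' *\<^sub>v f = P *\<^sub>v f + r" using P'v[OF f] ipfr cd by simp
        also have "\<dots> = f" using f_eq r Pf by (simp add: comm_add_vec)
        finally show "P' *\<^sub>v \<phi> a = \<phi> a" by (simp add: am f_def)
      qed
    next
      fix y :: "complex vec" assume y: "y \<in> carrier_vec N" and yo: "\<forall>a<Suc m. ip y (\<psi> a) = 0"
      have aKy: "adj K *\<^sub>v y = 0\<^sub>v N" using ran y yo by auto
      have "ip y s = ip y g - ip y (K *\<^sub>v f)" unfolding s_def using ip_minus_right[OF g Kf y] .
      also have "ip y g = 0" using yo by (simp add: g_def)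
      also have "ip y (K *\<^sub>v f) = cnj (ip (K *\<^sub>v f) y)" using ip_cnj y Kf by (metis carrier_vecD)
      also have "ip (K *\<^sub>v f) y = 0" using ipK[OF f y] aKy f by simp
      finally have "ip y s = 0" by simp
      thus "adj K' *\<^sub>v y = 0\<^sub>v N" using aK'v[OF y] aKy r by simp
    qed
  qed
qed


lemma mat_unit_vec: "(M::complex mat) \<in> carrier_mat n n \<Longrightarrow> l < n \<Longrightarrow> M *\<^sub>v unit_vec n l = col M l"
  by (intro eq_vecI) (auto simp: scalar_prod_def unit_vec_def if_distrib[of "(*) _"] cong: if_cong)

lemma ip_unit_right: assumes "x \<in> carrier_vec n" "i < n" shows "ip x (unit_vec n i) = x $ i"
proof -
  have "ip x (unit_vec n i) = (\<Sum>t<n. if t = i then x $ i else 0)"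
    using assms unfolding ip_def by (intro sum.cong) auto
  thus ?thesis using assms by simp
qed

lemma ip_unit_left: assumes "x \<in> carrier_vec n" "i < n" shows "ip (unit_vec n i) x = cnj (x $ i)"
proof -
  have "ip (unit_vec n i) x = (\<Sum>t<n. if t = i then cnj (x $ i) else 0)"
    using assms unfolding ip_def by (intro sum.cong) auto
  thus ?thesis using assms by simp
qed

lemma ip_mat_unit: "(M::complex mat) \<in> carrier_mat n n \<Longrightarrow> l < n \<Longrightarrow> i < n \<Longrightarrow> ip (M *\<^sub>v unit_vec n l) (unit_vec n i) = M $$ (i,l)"
  by (simp add: mat_unit_vec ip_unit_right)

definition qf :: "complex mat \<Rightarrow> complex vec \<Rightarrow> complex" where
  "qf M v = ip (M *\<^sub>v v) v"

lemma psd_qf: "psd n M \<longleftrightarrow> M \<in> carrier_mat n n \<and> (\<forall>v\<in>carrier_vec n. Im (qf M v) = 0 \<and> 0 \<le> Re (qf M v))"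
proof -
  have *: "\<And>v. M \<in> carrier_mat n n \<Longrightarrow> v \<in> carrier_vec n \<Longrightarrow> (\<Sum>i<n. cnj (v $ i) * (M *\<^sub>v v) $ i) = qf M v"
    by (simp add: qf_def ip_def mult.commute)
  show ?thesis
  proof
    assume "psd n M" thus "M \<in> carrier_mat n n \<and> (\<forall>v\<in>carrier_vec n. Im (qf M v) = 0 \<and> 0 \<le> Re (qf M v))"
      unfolding psd_def Let_def using * by metis
  next
    assume "M \<in> carrier_mat n n \<and> (\<forall>v\<in>carrier_vec n. Im (qf M v) = 0 \<and> 0 \<le> Re (qf M v))"
    thus "psd n M" unfolding psd_def Let_def using * by metis
  qed
qed

lemma qf_add: assumes M: "M \<in> carrier_mat n n" and a: "a \<in> carrier_vec n" and b: "b \<in> carrier_vec n"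
  shows "qf M (a + b) = qf M a + ip (M *\<^sub>v a) b + ip (M *\<^sub>v b) a + qf M b"
proof -
  have Ma: "M *\<^sub>v a \<in> carrier_vec n" and Mb: "M *\<^sub>v b \<in> carrier_vec n" using M a b by auto
  show ?thesis unfolding qf_def mult_add_distrib_mat_vec[OF M a b]
    using ip_add_left[OF Ma Mb] ip_add_right[OF a b] Ma Mb by simp
qed

lemma psd_zero_diag:
  assumes psd: "psd n M" and herm: "adj M = M" and k: "k < n" and j: "j < n" and z: "M $$ (k,k) = 0"
  shows "M $$ (k,j) = 0"
proof (rule ccontr)
  assume nz: "M $$ (k,j) \<noteq> 0"
  have M: "M \<in> carrier_mat n n" using psd by (simp add: psd_def)
  have herm': "\<And>a b. a < n \<Longrightarrow> b < n \<Longrightarrow> M $$ (a,b) = cnj (M $$ (b,a))"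
    using herm M by (metis carrier_matD index_adj)
  define b where "b = M $$ (j,k)"
  have bnz: "b \<noteq> 0" using nz herm'[OF k j] by (simp add: b_def)
  have jk: "j \<noteq> k" using nz z by auto
  define p where "p = Re (b * cnj b)"
  have p: "p > 0" using bnz by (simp add: p_def complex_mult_cnj sum_power2_gt_zero_iff complex_eq_iff)
  define t :: real where "t = (Re (M $$ (j,j)) + 1) / p"
  define y where "y = - complex_of_real t * cnj b"
  define e1 :: "complex vec" where "e1 = unit_vec n j"
  define e2 :: "complex vec" where "e2 = y \<cdot>\<^sub>v unit_vec n k"
  have e1: "e1 \<in> carrier_vec n" and e2: "e2 \<in> carrier_vec n" by (auto simp: e1_def e2_def)
  have "qf M (e1 + e2) = qf M e1 + ip (M *\<^sub>v e1) e2 + ip (M *\<^sub>v e2) e1 + qf M e2"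
    by (rule qf_add[OF M e1 e2])
  also have "qf M e1 = M $$ (j,j)" unfolding qf_def e1_def using ip_mat_unit[OF M j j] .
  also have "qf M e2 = 0"
    unfolding qf_def e2_def using M k z
    by (simp add: mult_mat_vec ip_smult_left ip_smult_right[of _ n] ip_mat_unit)
  also have "ip (M *\<^sub>v e1) e2 = cnj y * cnj b"
    unfolding e1_def e2_def using M k j herm'[OF k j]
    by (simp add: ip_smult_right[of _ n] ip_mat_unit b_def)
  also have "ip (M *\<^sub>v e2) e1 = y * b"
    unfolding e1_def e2_def using M k j
    by (simp add: mult_mat_vec ip_smult_left ip_mat_unit b_def)
  finally have q: "qf M (e1 + e2) = M $$ (j,j) + cnj y * cnj b + y * b" by simp
  have "Re (cnj y * cnj b) = - t * p" by (simp add: y_def p_def algebra_simps)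
  moreover have "Re (y * b) = - t * p" by (simp add: y_def p_def algebra_simps)
  ultimately have r1: "Re (qf M (e1 + e2)) = Re (M $$ (j,j)) - 2 * (t * p)" using q by simp
  have "t * p = Re (M $$ (j,j)) + 1" using p by (simp add: t_def)
  hence "Re (qf M (e1 + e2)) = - Re (M $$ (j,j)) - 2" using r1 by simp
  moreover have "0 \<le> Re (qf M (unit_vec n j))" using psd unfolding psd_qf by auto
  moreover have "qf M (unit_vec n j) = M $$ (j,j)" unfolding qf_def using ip_mat_unit[OF M j j] .
  moreover have "0 \<le> Re (qf M (e1 + e2))" using psd e1 e2 unfolding psd_qf by auto
  ultimately show False by (smt (verit))
qed

lemma psd_minus_outer:
  assumes psd: "psd n M" and herm: "adj M = M" and k: "k < n"
    and sdef: "s * s = M $$ (k,k)" and s0: "s \<noteq> 0" and cs: "cnj s = s"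
    and w: "w = (1 / s) \<cdot>\<^sub>v col M k"
  shows "psd n (M - outer w w)"
proof -
  have M: "M \<in> carrier_mat n n" using psd by (simp add: psd_def)
  have wc: "w \<in> carrier_vec n" unfolding w using col_dim[of M k] M by (metis carrier_matD(1) smult_carrier_vec)
  have O: "outer w w \<in> carrier_mat n n" using outer_carrier[of w w] wc by simp
  have M': "M - outer w w \<in> carrier_mat n n" using minus_carrier_mat[OF O] .
  have colk: "col M k = M *\<^sub>v unit_vec n k" using mat_unit_vec[OF M k] by simp
  have e: "unit_vec n k \<in> carrier_vec n" by simp
  have Mkk: "cnj (M $$ (k,k)) = M $$ (k,k)" using sdef cs by (metis complex_cnj_mult)
  show ?thesis unfolding psd_qf
  proof (intro conjI ballI)
    show "M - outer w w \<in> carrier_mat n n" by fact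
    fix v :: "complex vec" assume v: "v \<in> carrier_vec n"
    have Mv: "M *\<^sub>v v \<in> carrier_vec n" using M v by simp
    define \<beta> where "\<beta> = (M *\<^sub>v v) $ k"
    have ipMev: "ip (M *\<^sub>v unit_vec n k) v = cnj \<beta>"
      using ip_adj[OF M e v] herm ip_unit_left[OF Mv k] by (simp add: \<beta>_def)
    have ipvMe: "ip v (M *\<^sub>v unit_vec n k) = \<beta>"
      using ip_cnj[of v "M *\<^sub>v unit_vec n k"] ipMev v M by simp
    have ipvw: "ip v w = \<beta> / s"
      unfolding w colk using ip_smult_right[of v n "M *\<^sub>v unit_vec n k"] v M ipvMe cs by simp
    have ipwv: "ip w v = cnj \<beta> / s"
      unfolding w colk using ip_smult_left ipMev by simp
    have "(M - outer w w) *\<^sub>v v = M *\<^sub>v v - outer w w *\<^sub>v v"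
      using minus_mult_distrib_mat_vec[OF M O v] .
    also have "outer w w *\<^sub>v v = ip v w \<cdot>\<^sub>v w" using outer_mult_vec[of v w w] v wc by simp
    finally have "qf (M - outer w w) v = ip (M *\<^sub>v v - ip v w \<cdot>\<^sub>v w) v" by (simp add: qf_def)
    also have "\<dots> = qf M v - ip v w * ip w v"
      using ip_minus_left[OF Mv, of "ip v w \<cdot>\<^sub>v w" v] wc by (simp add: qf_def ip_smult_left)
    finally have q1: "qf (M - outer w w) v = qf M v - \<beta> * cnj \<beta> / (s * s)"
      using ipvw ipwv by simp
    define \<gamma> where "\<gamma> = - \<beta> / (s * s)"
    define u where "u = v + \<gamma> \<cdot>\<^sub>v unit_vec n k"
    have ge: "\<gamma> \<cdot>\<^sub>v unit_vec n k \<in> carrier_vec n" by simp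
    have u: "u \<in> carrier_vec n" using v by (simp add: u_def)
    have "qf M u = qf M v + ip (M *\<^sub>v v) (\<gamma> \<cdot>\<^sub>v unit_vec n k) + ip (M *\<^sub>v (\<gamma> \<cdot>\<^sub>v unit_vec n k)) v
        + qf M (\<gamma> \<cdot>\<^sub>v unit_vec n k)"
      unfolding u_def by (rule qf_add[OF M v ge])
    also have "ip (M *\<^sub>v v) (\<gamma> \<cdot>\<^sub>v unit_vec n k) = cnj \<gamma> * \<beta>"
      using ip_smult_right[OF Mv e] ip_unit_right[OF Mv k] by (simp add: \<beta>_def)
    also have "ip (M *\<^sub>v (\<gamma> \<cdot>\<^sub>v unit_vec n k)) v = \<gamma> * cnj \<beta>"
      using mult_mat_vec[OF M e] ip_smult_left ipMev by simp
    also have "qf M (\<gamma> \<cdot>\<^sub>v unit_vec n k) = \<gamma> * cnj \<gamma> * M $$ (k,k)"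
      unfolding qf_def using mult_mat_vec[OF M e] ip_smult_left ip_smult_right[of _ n] ip_mat_unit[OF M k k] M
      by simp
    finally have "qf M u = qf M v + cnj \<gamma> * \<beta> + \<gamma> * cnj \<beta> + \<gamma> * cnj \<gamma> * M $$ (k,k)" .
    also have "\<dots> = qf M v - \<beta> * cnj \<beta> / (s * s)"
      unfolding \<gamma>_def using s0 cs sdef by (simp add: field_simps)
    finally have "qf (M - outer w w) v = qf M u" using q1 by simp
    thus "Im (qf (M - outer w w) v) = 0" "0 \<le> Re (qf (M - outer w w) v)"
      using psd u unfolding psd_qf by auto
  qed
qed


lemma chol_aux:
  assumes "M \<in> carrier_mat n n" "adj M = M" "psd n M"
    "\<forall>i<n. \<forall>j<n. (i < n - m \<or> j < n - m) \<longrightarrow> M $$ (i,j) = 0"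
  shows "\<exists>f. (\<forall>k<n-m. \<forall>i. f k i = 0) \<and> (\<forall>i<n. \<forall>j<n. M $$ (i,j) = (\<Sum>k<n. f k i * cnj (f k j)))"
  using assms
proof (induction m arbitrary: M)
  case 0
  show ?case by (rule exI[of _ "\<lambda>_ _. 0"]) (use 0 in auto)
next
  case (Suc m M)
  note M = Suc.prems(1) and herm = Suc.prems(2) and psd = Suc.prems(3) and zero = Suc.prems(4)
  have herm': "\<And>a b. a < n \<Longrightarrow> b < n \<Longrightarrow> M $$ (a,b) = cnj (M $$ (b,a))"
    using herm M by (metis carrier_matD index_adj)
  show ?case
  proof (cases "n \<le> m")
    case True
    hence "n - Suc m = n - m" by simp
    thus ?thesis using Suc.IH[OF M herm psd] zero by auto
  next
    case False
    define k where "k = n - Suc m"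
    have k: "k < n" and nm: "n - m = Suc k" using False by (auto simp: k_def)
    show ?thesis
    proof (cases "M $$ (k,k) = 0")
      case True
      have row: "M $$ (k,j) = 0" if "j < n" for j using psd_zero_diag[OF psd herm k that True] .
      have "\<forall>i<n. \<forall>j<n. (i < n - m \<or> j < n - m) \<longrightarrow> M $$ (i,j) = 0"
      proof (intro allI impI)
        fix i j assume i: "i < n" and j: "j < n" and ij: "i < n - m \<or> j < n - m"
        show "M $$ (i,j) = 0"
        proof (cases "i = k \<or> j = k")
          case True thus ?thesis using row herm' i j by (metis complex_cnj_zero)
        next
          case False thus ?thesis using zero i j ij nm k_def by auto
        qed
      qed
      from Suc.IH[OF M herm psd this] obtain f where
        f0: "\<forall>k<n-m. \<forall>i. f k i = 0" and fM: "\<forall>i<n. \<forall>j<n. M $$ (i,j) = (\<Sum>k<n. f k i * cnj (f k j))" by blast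
      show ?thesis using f0 fM nm k_def by (intro exI[of _ f]) auto
    next
      case False
      note Mkk0 = False
      have cM: "cnj (M $$ (k,k)) = M $$ (k,k)" using herm'[OF k k] by simp
      define \<mu> where "\<mu> = Re (M $$ (k,k))"
      have Mkk: "M $$ (k,k) = of_real \<mu>" using cM by (simp add: \<mu>_def complex_eq_iff)
      have "0 \<le> Re (qf M (unit_vec n k))" using psd unfolding psd_qf by auto
      moreover have "qf M (unit_vec n k) = M $$ (k,k)" unfolding qf_def using ip_mat_unit[OF M k k] .
      ultimately have "0 \<le> \<mu>" by (simp add: \<mu>_def)
      moreover have "\<mu> \<noteq> 0" using False Mkk by auto
      ultimately have mu0: "\<mu> > 0" by simp
      define s where "s = complex_of_real (sqrt \<mu>)"
      have ss: "s * s = M $$ (k,k)" using mu0 Mkk by (simp add: s_def flip: of_real_mult)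
      have s0: "s \<noteq> 0" using mu0 by (simp add: s_def)
      have cs: "cnj s = s" by (simp add: s_def)
      define w where "w = (1 / s) \<cdot>\<^sub>v col M k"
      have wi: "w $ i = M $$ (i,k) / s" if "i < n" for i using that M k by (simp add: w_def)
      have wc: "w \<in> carrier_vec n" unfolding w_def using col_dim[of M k] M by (metis carrier_matD(1) smult_carrier_vec)
      have O: "outer w w \<in> carrier_mat n n" using outer_carrier[of w w] wc by simp
      define M' where "M' = M - outer w w"
      have M': "M' \<in> carrier_mat n n" unfolding M'_def using minus_carrier_mat[OF O] .
      have hM': "adj M' = M'" unfolding M'_def using adj_minus[OF M O] herm by simp
      have pM': "psd n M'" unfolding M'_def by (rule psd_minus_outer[OF psd herm k ss s0 cs w_def])
      have M'ij: "M' $$ (i,j) = M $$ (i,j) - M $$ (i,k) * cnj (M $$ (j,k)) / (s * s)" if "i < n" "j < n" for i j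
        using that M wc wi unfolding M'_def by (simp add: cs)
      have "\<forall>i<n. \<forall>j<n. (i < n - m \<or> j < n - m) \<longrightarrow> M' $$ (i,j) = 0"
      proof (intro allI impI)
        fix i j assume i: "i < n" and j: "j < n" and ij: "i < n - m \<or> j < n - m"
        show "M' $$ (i,j) = 0"
        proof (cases "i = k")
          case True
          thus ?thesis using M'ij[OF i j] ss s0 herm'[OF k j] Mkk0 by simp
        next
          case ik: False
          show ?thesis
          proof (cases "j = k")
            case True
            thus ?thesis using M'ij[OF i j] ss s0 cM Mkk0 by simp
          next
            case False
            hence "i < k \<or> j < k" using ik ij nm by auto
            moreover have "M $$ (i,k) = 0" if "i < k" using zero i k that k_def by auto
            moreover have "M $$ (j,k) = 0" if "j < k" using zero j k that k_def by auto
            moreover have "M $$ (i,j) = 0" if "i < k \<or> j < k" using zero i j that k_def by auto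
            ultimately show ?thesis using M'ij[OF i j] by auto
          qed
        qed
      qed
      from Suc.IH[OF M' hM' pM' this] obtain f where
        f0: "\<forall>k<n-m. \<forall>i. f k i = 0" and fM: "\<forall>i<n. \<forall>j<n. M' $$ (i,j) = (\<Sum>k<n. f k i * cnj (f k j))" by blast
      define g where "g = f(k := (\<lambda>i. w $ i))"
      show ?thesis
      proof (intro exI[of _ g] conjI allI impI)
        fix k' i assume "k' < n - Suc m" thus "g k' i = 0" using f0 k_def by (auto simp: g_def)
      next
        fix i j assume i: "i < n" and j: "j < n"
        have fk: "f k i' = 0" for i' using f0 nm by auto
        have "(\<Sum>k'<n. g k' i * cnj (g k' j)) = g k i * cnj (g k j) + (\<Sum>k'\<in>{..<n}-{k}. g k' i * cnj (g k' j))"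
          using k by (subst sum.remove[of _ k]) auto
        also have "(\<Sum>k'\<in>{..<n}-{k}. g k' i * cnj (g k' j)) = (\<Sum>k'\<in>{..<n}-{k}. f k' i * cnj (f k' j))"
          by (intro sum.cong) (auto simp: g_def)
        also have "\<dots> = (\<Sum>k'<n. f k' i * cnj (f k' j))"
          using k fk by (subst (2) sum.remove[of _ k]) auto
        also have "\<dots> = M' $$ (i,j)" using fM i j by simp
        also have "g k i * cnj (g k j) = w $ i * cnj (w $ j)" by (simp add: g_def)
        finally have "(\<Sum>k'<n. g k' i * cnj (g k' j)) = w $ i * cnj (w $ j) + M' $$ (i,j)" .
        moreover have "M' $$ (i,j) = M $$ (i,j) - w $ i * cnj (w $ j)"
          using i j M wc unfolding M'_def by simp
        ultimately show "M $$ (i,j) = (\<Sum>k'<n. g k' i * cnj (g k' j))" by simp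
      qed
    qed
  qed
qed

lemma cholesky:
  assumes "density n M"
  shows "\<exists>f. \<forall>i<n. \<forall>j<n. M $$ (i,j) = (\<Sum>k<n. f k i * cnj (f k j))"
proof -
  have "M \<in> carrier_mat n n" "adj M = M" "psd n M" using assms by (auto simp: density_def)
  from chol_aux[OF this, of n] show ?thesis by auto
qed


lemma sum_split: "(\<Sum>i<(a::nat)*b. h i) = (\<Sum>x<a. \<Sum>y<b. h (x*b+y)) "
proof (induction a)
  case 0 thus ?case by simp
next
  case (Suc a)
  have "(\<Sum>i<Suc a * b. h i) = (\<Sum>i\<in>{0..<a*b}. h i) + (\<Sum>i\<in>{a*b..<a*b+b}. h i)"
    by (simp add: lessThan_atLeast0 sum.atLeastLessThan_concat add.commute)
  also have "(\<Sum>i\<in>{a*b..<a*b+b}. h i) = (\<Sum>y<b. h (a*b+y))"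
    using sum.shift_bounds_nat_ivl[of h 0 "a*b" b] by (simp add: lessThan_atLeast0 add.commute)
  finally show ?case using Suc by (simp add: lessThan_atLeast0)
qed

lemma delta_simps[simp]:
  "(if P then (1::complex) else 0) * x = (if P then x else 0)"
  "x * (if P then (1::complex) else 0) = (if P then x else 0)"
  "cnj (if P then (1::complex) else 0) = (if P then 1 else 0)"
  by auto

lemma tr_mult_comm: assumes "A \<in> carrier_mat n m" "B \<in> carrier_mat m n"
  shows "tr (A * B) = tr (B * A)"
proof -
  have "tr (A * B) = (\<Sum>i<n. \<Sum>j<m. A $$ (i,j) * B $$ (j,i))"
    using assms by (simp add: tr_def scalar_prod_def lessThan_atLeast0)
  also have "\<dots> = (\<Sum>j<m. \<Sum>i<n. B $$ (j,i) * A $$ (i,j))"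
    by (subst sum.swap) (simp add: mult.commute)
  also have "\<dots> = tr (B * A)"
    using assms by (simp add: tr_def scalar_prod_def lessThan_atLeast0)
  finally show ?thesis .
qed

lemma msum_carrier[simp]: "msum N Ms \<in> carrier_mat N N"
  by (simp add: msum_def)

lemma index_msum[simp]: "i < N \<Longrightarrow> j < N \<Longrightarrow> msum N Ms $$ (i,j) = (\<Sum>M\<leftarrow>Ms. M $$ (i,j))"
  by (simp add: msum_def)

lemma dim_msum[simp]: "dim_row (msum N Ms) = N" "dim_col (msum N Ms) = N"
  by (auto simp: msum_def)

lemma msum_Nil: "msum N [] = 0\<^sub>m N N"
  by (intro eq_matI) auto

lemma msum_Cons: "M \<in> carrier_mat N N \<Longrightarrow> msum N (M # Ms) = M + msum N Ms"
  by (intro eq_matI) auto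

lemma tr_add: "A \<in> carrier_mat N N \<Longrightarrow> B \<in> carrier_mat N N \<Longrightarrow> tr (A + B) = tr A + tr B"
  by (simp add: tr_def sum.distrib)

lemma tr_msum: "(\<forall>M\<in>set Ms. M \<in> carrier_mat N N) \<Longrightarrow> tr (msum N Ms) = (\<Sum>M\<leftarrow>Ms. tr M)"
proof (induction Ms)
  case Nil thus ?case by (simp add: msum_Nil tr_def)
next
  case (Cons M Ms) thus ?case using tr_add[of M N "msum N Ms"] by (simp add: msum_Cons)
qed

definition pos :: "nat \<Rightarrow> complex mat \<Rightarrow> bool" where
  "pos N M \<longleftrightarrow> M \<in> carrier_mat N N \<and> adj M = M \<and> psd N M"

lemma density_pos: "density N M \<longleftrightarrow> pos N M \<and> tr M = 1"
  by (auto simp: density_def pos_def)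

lemma qf_add_mat: "A \<in> carrier_mat N N \<Longrightarrow> B \<in> carrier_mat N N \<Longrightarrow> v \<in> carrier_vec N \<Longrightarrow> qf (A + B) v = qf A v + qf B v"
  by (simp add: qf_def add_mult_distrib_mat_vec ip_add_left[of _ N])

lemma pos_add: assumes "pos N A" "pos N B" shows "pos N (A + B)"
proof -
  have A: "A \<in> carrier_mat N N" and B: "B \<in> carrier_mat N N" using assms by (auto simp: pos_def)
  show ?thesis using assms A B unfolding pos_def psd_qf
    by (auto simp: adj_add qf_add_mat)
qed

lemma pos_zero: "pos N (0\<^sub>m N N)"
  by (auto simp: pos_def psd_qf qf_def ip_def scalar_prod_def)

lemma pos_conj: assumes M: "pos m M" and K: "K \<in> carrier_mat N m"
  shows "pos N (K * M * adj K)"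
proof -
  have Mc: "M \<in> carrier_mat m m" and hM: "adj M = M" and pM: "psd m M" using M by (auto simp: pos_def)
  have aK: "adj K \<in> carrier_mat m N" using K by simp
  have C: "K * M * adj K \<in> carrier_mat N N" using K Mc aK by (metis mult_carrier_mat)
  have "adj (K * M * adj K) = adj (adj K) * adj (K * M)"
    by (rule adj_mult[of _ N m _ N]) (use K Mc aK in auto)
  also have "adj (K * M) = adj M * adj K" by (rule adj_mult[OF K Mc])
  finally have h: "adj (K * M * adj K) = K * M * adj K"
    using hM K Mc aK by (simp add: assoc_mult_mat[of K N m M m "adj K" N])
  have q: "qf (K * M * adj K) v = qf M (adj K *\<^sub>v v)" if v: "v \<in> carrier_vec N" for v
  proof -
    have Kv: "adj K *\<^sub>v v \<in> carrier_vec m" using aK v by simp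
    have MKv: "M *\<^sub>v (adj K *\<^sub>v v) \<in> carrier_vec m" using Mc Kv by simp
    have "(K * M * adj K) *\<^sub>v v = K *\<^sub>v (M *\<^sub>v (adj K *\<^sub>v v))"
      using assoc_mult_mat_vec[of "K * M" N m "adj K" N v] assoc_mult_mat_vec[OF K Mc Kv] K Mc aK v
      by (metis mult_carrier_mat)
    hence "qf (K * M * adj K) v = ip (K *\<^sub>v (M *\<^sub>v (adj K *\<^sub>v v))) v" by (simp add: qf_def)
    also have "\<dots> = ip (M *\<^sub>v (adj K *\<^sub>v v)) (adj K *\<^sub>v v)" by (rule ip_adj[OF K MKv v])
    finally show ?thesis by (simp add: qf_def)
  qed
  show ?thesis unfolding pos_def psd_qf using C h q pM aK unfolding psd_qf by auto
qed

lemma pos_msum: "(\<forall>M\<in>set Ms. pos N M) \<Longrightarrow> pos N (msum N Ms)"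
proof (induction Ms)
  case Nil thus ?case by (simp add: msum_Nil pos_zero)
next
  case (Cons M Ms)
  have "M \<in> carrier_mat N N" using Cons.prems by (simp add: pos_def)
  thus ?case using Cons by (simp add: msum_Cons pos_add)
qed

lemma pos_apply_kraus: "pos m M \<Longrightarrow> (\<forall>K\<in>set Ks. K \<in> carrier_mat N m) \<Longrightarrow> pos N (apply_kraus N Ks M)"
  unfolding apply_kraus_def by (rule pos_msum) (auto intro: pos_conj)


lemma idx_lt: "(i::nat) < m \<Longrightarrow> k < d \<Longrightarrow> i*d+k < m*d"
proof -
  assume "i < m" "k < d"
  hence "Suc i * d \<le> m * d" by (intro mult_le_mono1) simp
  moreover have "i*d + k < Suc i * d" using \<open>k < d\<close> by simp
  ultimately show ?thesis by linarith
qed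

lemma divmod_idx[simp]: "(t::nat) < R \<Longrightarrow> (x*R + t) div R = x" "(t::nat) < R \<Longrightarrow> (x*R + t) mod R = t"
  by auto

lemma sum_delta_divmod:
  assumes "(0::nat) < R"
  shows "(\<Sum>s<R. if u = x*R+s then f s else 0) = (if u div R = x then f (u mod R) else (0::complex))"
proof -
  have "(\<Sum>s<R. if u = x*R+s then f s else 0) = (\<Sum>s<R. if u div R = x \<and> s = u mod R then f s else 0)"
  proof (intro sum.cong refl)
    fix s assume "s \<in> {..<R}"
    hence "s < R" by simp
    have "u = x*R+s \<longleftrightarrow> (u div R = x \<and> s = u mod R)"
    proof
      assume "u = x*R+s" thus "u div R = x \<and> s = u mod R" using \<open>s < R\<close> by simp
    next
      assume "u div R = x \<and> s = u mod R" thus "u = x*R+s" by (metis div_mult_mod_eq)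
    qed
    thus "(if u = x*R+s then f s else 0) = (if u div R = x \<and> s = u mod R then f s else 0)" by simp
  qed
  also have "\<dots> = (if u div R = x then f (u mod R) else 0)"
    using assms by (cases "u div R = x") (auto simp: sum.delta')
  finally show ?thesis .
qed

definition sel :: "nat \<Rightarrow> nat \<Rightarrow> nat \<Rightarrow> complex mat" where
  "sel m d k = mat (m*d) m (\<lambda>(u,i). if u = i*d + k then 1 else 0)"

lemma sel_carrier[simp]: "sel m d k \<in> carrier_mat (m*d) m"
  by (simp add: sel_def)

lemma adj_sel_mult: assumes M: "M \<in> carrier_mat (m*d) c" and k: "k < d"
  shows "adj (sel m d k) * M = mat m c (\<lambda>(i,j). M $$ (i*d+k, j))"
proof (rule eq_matI)
  fix i j assume "i < dim_row (mat m c (\<lambda>(i,j). M $$ (i*d+k, j)))" "j < dim_col (mat m c (\<lambda>(i,j). M $$ (i*d+k, j)))"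
  hence i: "i < m" and j: "j < c" by auto
  have "(adj (sel m d k) * M) $$ (i,j) = (\<Sum>u\<in>{0..<m*d}. (if u = i*d+k then M $$ (u,j) else 0))"
    using M i j by (auto simp: scalar_prod_def sel_def intro!: sum.cong)
  also have "\<dots> = M $$ (i*d+k, j)" using idx_lt[OF i k] by simp
  finally show "(adj (sel m d k) * M) $$ (i,j) = mat m c (\<lambda>(i,j). M $$ (i*d+k, j)) $$ (i,j)" using i j by simp
qed (use M in \<open>auto simp: sel_def\<close>)

lemma mult_sel: assumes A: "A \<in> carrier_mat r (m*d)" and k: "k < d"
  shows "A * sel m d k = mat r m (\<lambda>(i,j). A $$ (i, j*d+k))"
proof (rule eq_matI)
  fix i j assume "i < dim_row (mat r m (\<lambda>(i,j). A $$ (i, j*d+k)))" "j < dim_col (mat r m (\<lambda>(i,j). A $$ (i, j*d+k)))"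
  hence i: "i < r" and j: "j < m" by auto
  have "(A * sel m d k) $$ (i,j) = (\<Sum>u\<in>{0..<m*d}. (if u = j*d+k then A $$ (i,u) else 0))"
    using A i j by (auto simp: scalar_prod_def sel_def intro!: sum.cong)
  also have "\<dots> = A $$ (i, j*d+k)" using idx_lt[OF j k] by simp
  finally show "(A * sel m d k) $$ (i,j) = mat r m (\<lambda>(i,j). A $$ (i, j*d+k)) $$ (i,j)" using i j by simp
qed (use A in \<open>auto simp: sel_def\<close>)

lemma sel_entry: assumes M: "M \<in> carrier_mat (m*d) (m*d)" and k: "k < d"
  shows "adj (sel m d k) * M * sel m d k = mat m m (\<lambda>(i,j). M $$ (i*d+k, j*d+k))"
proof -
  have "adj (sel m d k) * M * sel m d k = mat m (m*d) (\<lambda>(i,j). M $$ (i*d+k, j)) * sel m d k"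
    by (simp add: adj_sel_mult[OF M k])
  also have "\<dots> = mat m m (\<lambda>(i,j). M $$ (i*d+k, j*d+k))"
    by (subst mult_sel[of _ m]) (use k idx_lt in auto)
  finally show ?thesis .
qed

lemma index_ptrace2: "M \<in> carrier_mat (m*d) (m*d) \<Longrightarrow> 0 < d \<Longrightarrow> i < m \<Longrightarrow> j < m \<Longrightarrow>
  ptrace2 d M $$ (i,j) = (\<Sum>k<d. M $$ (i*d+k, j*d+k))"
  by (simp add: ptrace2_def)

lemma ptrace2_carrier[simp]: "M \<in> carrier_mat (m*d) (m*d) \<Longrightarrow> 0 < d \<Longrightarrow> ptrace2 d M \<in> carrier_mat m m"
  by (simp add: ptrace2_def)

lemma sum_list_upt_sum: "(\<Sum>k\<leftarrow>[0..<d]. f k) = (\<Sum>k<d. f k)"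
  by (simp add: interv_sum_list_conv_sum_set_nat lessThan_atLeast0)

lemma ptrace2_sel: assumes M: "M \<in> carrier_mat (m*d) (m*d)" and d: "0 < d"
  shows "ptrace2 d M = msum m (map (\<lambda>k. adj (sel m d k) * M * sel m d k) [0..<d])"
proof (rule eq_matI)
  fix i j assume "i < dim_row (msum m (map (\<lambda>k. adj (sel m d k) * M * sel m d k) [0..<d]))"
    "j < dim_col (msum m (map (\<lambda>k. adj (sel m d k) * M * sel m d k) [0..<d]))"
  hence i: "i < m" and j: "j < m" by auto
  have "msum m (map (\<lambda>k. adj (sel m d k) * M * sel m d k) [0..<d]) $$ (i,j)
     = (\<Sum>k\<leftarrow>[0..<d]. (adj (sel m d k) * M * sel m d k) $$ (i,j))"
    using i j by (simp add: comp_def)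
  also have "\<dots> = (\<Sum>k\<leftarrow>[0..<d]. M $$ (i*d+k, j*d+k))"
    by (intro arg_cong[where f=sum_list] map_cong refl) (use i j M sel_entry in auto)
  also have "\<dots> = ptrace2 d M $$ (i,j)" using index_ptrace2[OF M d i j] by (simp add: sum_list_upt_sum)
  finally show "ptrace2 d M $$ (i,j) = msum m (map (\<lambda>k. adj (sel m d k) * M * sel m d k) [0..<d]) $$ (i,j)" by simp
qed (use M d in \<open>auto simp: ptrace2_def\<close>)

lemma pos_ptrace2: assumes "pos (m*d) M" "0 < d" shows "pos m (ptrace2 d M)"
proof -
  have M: "M \<in> carrier_mat (m*d) (m*d)" using assms by (simp add: pos_def)
  show ?thesis unfolding ptrace2_sel[OF M assms(2)]
  proof (rule pos_msum, clarsimp)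
    fix k assume "k < d"
    show "pos m (adj (sel m d k) * M * sel m d k)"
      using pos_conj[OF assms(1), of "adj (sel m d k)" m] by simp
  qed
qed

lemma tr_ptrace2: assumes M: "M \<in> carrier_mat (m*d) (m*d)" and d: "0 < d"
  shows "tr (ptrace2 d M) = tr M"
proof -
  have "tr (ptrace2 d M) = (\<Sum>i<m. \<Sum>k<d. M $$ (i*d+k, i*d+k))"
    unfolding tr_def using M d by (simp add: index_ptrace2 ptrace2_def)
  also have "\<dots> = (\<Sum>u<m*d. M $$ (u,u))" by (simp add: sum_split)
  also have "\<dots> = tr M" using M by (simp add: tr_def)
  finally show ?thesis .
qed

lemma density_ptrace2: "density (m*d) M \<Longrightarrow> 0 < d \<Longrightarrow> density m (ptrace2 d M)"
  unfolding density_pos using pos_ptrace2 tr_ptrace2 by (auto simp: pos_def)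

lemma ptrace2_ptrace2: assumes M: "M \<in> carrier_mat (m*b*x) (m*b*x)" and b: "0 < b" and x: "0 < x"
  shows "ptrace2 b (ptrace2 x M) = ptrace2 (b*x) M"
proof (rule eq_matI)
  have M1: "M \<in> carrier_mat ((m*b)*x) ((m*b)*x)" using M by simp
  have M2: "M \<in> carrier_mat (m*(b*x)) (m*(b*x))" using M by (simp add: mult.assoc)
  have P1: "ptrace2 x M \<in> carrier_mat (m*b) (m*b)" using ptrace2_carrier[OF M1 x] .
  show "dim_row (ptrace2 b (ptrace2 x M)) = dim_row (ptrace2 (b*x) M)"
    "dim_col (ptrace2 b (ptrace2 x M)) = dim_col (ptrace2 (b*x) M)"
    using ptrace2_carrier[OF P1 b] ptrace2_carrier[OF M2] b x by auto
  fix i j assume "i < dim_row (ptrace2 (b*x) M)" "j < dim_col (ptrace2 (b*x) M)"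
  hence i: "i < m" and j: "j < m" using ptrace2_carrier[OF M2] b x by auto
  have "ptrace2 b (ptrace2 x M) $$ (i,j) = (\<Sum>c<b. ptrace2 x M $$ (i*b+c, j*b+c))"
    using index_ptrace2[OF P1 b i j] .
  also have "\<dots> = (\<Sum>c<b. \<Sum>y<x. M $$ ((i*b+c)*x+y, (j*b+c)*x+y))"
    by (intro sum.cong refl) (use index_ptrace2[OF M1 x] idx_lt i j in auto)
  also have "\<dots> = (\<Sum>c<b. \<Sum>y<x. M $$ (i*(b*x)+(c*x+y), j*(b*x)+(c*x+y)))"
    by (simp add: algebra_simps)
  also have "\<dots> = (\<Sum>r<b*x. M $$ (i*(b*x)+r, j*(b*x)+r))"
    by (simp add: sum_split)
  also have "\<dots> = ptrace2 (b*x) M $$ (i,j)" using index_ptrace2[OF M2 _ i j] b x by simp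
  finally show "ptrace2 b (ptrace2 x M) $$ (i,j) = ptrace2 (b*x) M $$ (i,j)" .
qed


definition emb :: "nat \<Rightarrow> nat \<Rightarrow> nat \<Rightarrow> complex mat" where
  "emb a R x = mat (a*R) R (\<lambda>(u,s). if u = x*R + s then 1 else 0)"

lemma emb_carrier[simp]: "emb a R x \<in> carrier_mat (a*R) R"
  by (simp add: emb_def)

lemma adj_emb_mult: assumes M: "M \<in> carrier_mat (a*R) c" and x: "x < a"
  shows "adj (emb a R x) * M = mat R c (\<lambda>(s,j). M $$ (x*R+s, j))"
proof (rule eq_matI)
  fix i j assume "i < dim_row (mat R c (\<lambda>(s,j). M $$ (x*R+s, j)))" "j < dim_col (mat R c (\<lambda>(s,j). M $$ (x*R+s, j)))"
  hence i: "i < R" and j: "j < c" by auto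
  have "(adj (emb a R x) * M) $$ (i,j) = (\<Sum>u\<in>{0..<a*R}. (if u = x*R+i then M $$ (u,j) else 0))"
    using M i j by (auto simp: scalar_prod_def emb_def intro!: sum.cong)
  also have "\<dots> = M $$ (x*R+i, j)" using idx_lt[OF x i] by simp
  finally show "(adj (emb a R x) * M) $$ (i,j) = mat R c (\<lambda>(s,j). M $$ (x*R+s, j)) $$ (i,j)" using i j by simp
qed (use M in \<open>auto simp: emb_def\<close>)

lemma mult_emb: assumes A: "A \<in> carrier_mat r (a*R)" and x: "x < a"
  shows "A * emb a R x = mat r R (\<lambda>(i,t). A $$ (i, x*R+t))"
proof (rule eq_matI)
  fix i j assume "i < dim_row (mat r R (\<lambda>(i,t). A $$ (i, x*R+t)))" "j < dim_col (mat r R (\<lambda>(i,t). A $$ (i, x*R+t)))"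
  hence i: "i < r" and j: "j < R" by auto
  have "(A * emb a R x) $$ (i,j) = (\<Sum>u\<in>{0..<a*R}. (if u = x*R+j then A $$ (i,u) else 0))"
    using A i j by (auto simp: scalar_prod_def emb_def intro!: sum.cong)
  also have "\<dots> = A $$ (i, x*R+j)" using idx_lt[OF x j] by simp
  finally show "(A * emb a R x) $$ (i,j) = mat r R (\<lambda>(i,t). A $$ (i, x*R+t)) $$ (i,j)" using i j by simp
qed (use A in \<open>auto simp: emb_def\<close>)

lemma emb_block: assumes M: "M \<in> carrier_mat (a*R) (a*R)" and x: "x < a" and x': "x' < a"
  shows "adj (emb a R x) * M * emb a R x' = mat R R (\<lambda>(s,t). M $$ (x*R+s, x'*R+t))"
proof -
  have "adj (emb a R x) * M * emb a R x' = mat R (a*R) (\<lambda>(s,j). M $$ (x*R+s, j)) * emb a R x'"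
    by (simp add: adj_emb_mult[OF M x])
  also have "\<dots> = mat R R (\<lambda>(s,t). M $$ (x*R+s, x'*R+t))"
    by (subst mult_emb[of _ R a]) (use x' idx_lt in auto)
  finally show ?thesis .
qed

lemma ptrace2_emb: assumes M: "M \<in> carrier_mat (a*R) (a*R)" and R: "0 < R" and x: "x < a" and x': "x' < a"
  shows "ptrace2 R M $$ (x,x') = tr (adj (emb a R x) * M * emb a R x')"
  unfolding emb_block[OF M x x'] using index_ptrace2[OF M R x x'] by (simp add: tr_def)

lemma index_kron1: assumes K: "K \<in> carrier_mat R R" and u: "u < a*R" and v: "v < a*R"
  shows "kron (1\<^sub>m a) K $$ (u,v) = (if u div R = v div R then K $$ (u mod R, v mod R) else 0)"
proof -
  have "u div R < a" "v div R < a" using u v by (auto simp: less_mult_imp_div_less)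
  thus ?thesis using K u v unfolding kron_def by auto
qed

lemma kron1_carrier[simp]: "K \<in> carrier_mat R R \<Longrightarrow> kron (1\<^sub>m a) K \<in> carrier_mat (a*R) (a*R)"
  by (auto simp: kron_def)

lemma kron_emb: assumes K: "K \<in> carrier_mat R R" and x: "x < a"
  shows "kron (1\<^sub>m a) K * emb a R x = emb a R x * K"
proof (rule eq_matI)
  fix u t assume "u < dim_row (emb a R x * K)" "t < dim_col (emb a R x * K)"
  hence u: "u < a*R" and t: "t < R" using K by (auto simp: emb_def)
  have R: "0 < R" using t by simp
  have "(kron (1\<^sub>m a) K * emb a R x) $$ (u,t) = kron (1\<^sub>m a) K $$ (u, x*R+t)"
    by (subst mult_emb[of _ "a*R" a]) (use K x u t in auto)
  also have "\<dots> = (if u div R = x then K $$ (u mod R, t) else 0)"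
    using index_kron1[OF K u idx_lt[OF x t]] t by simp
  also have "\<dots> = (\<Sum>s<R. if u = x*R+s then K $$ (s,t) else 0)"
    using sum_delta_divmod[OF R, of u x "\<lambda>s. K $$ (s,t)"] by simp
  also have "\<dots> = (emb a R x * K) $$ (u,t)"
    using K u t by (auto simp: emb_def scalar_prod_def lessThan_atLeast0 intro!: sum.cong)
  finally show "(kron (1\<^sub>m a) K * emb a R x) $$ (u,t) = (emb a R x * K) $$ (u,t)" .
qed (use K in \<open>auto simp: emb_def kron_def\<close>)

lemma adj_emb_kron: assumes K: "K \<in> carrier_mat R R" and x: "x < a"
  shows "adj (emb a R x) * kron (1\<^sub>m a) K = K * adj (emb a R x)"
proof (rule eq_matI)
  fix s v assume "s < dim_row (K * adj (emb a R x))" "v < dim_col (K * adj (emb a R x))"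
  hence s: "s < R" and v: "v < a*R" using K by (auto simp: emb_def)
  have R: "0 < R" using s by simp
  have KK: "kron (1\<^sub>m a) K \<in> carrier_mat (a*R) (a*R)" using K by simp
  have "(adj (emb a R x) * kron (1\<^sub>m a) K) $$ (s,v) = kron (1\<^sub>m a) K $$ (x*R+s, v)"
    by (subst adj_emb_mult[OF KK x]) (use s v in auto)
  also have "\<dots> = (if v div R = x then K $$ (s, v mod R) else 0)"
    using index_kron1[OF K idx_lt[OF x s] v] s by auto
  also have "\<dots> = (\<Sum>t<R. if v = x*R+t then K $$ (s,t) else 0)"
    using sum_delta_divmod[OF R, of v x "\<lambda>t. K $$ (s,t)"] by simp
  also have "\<dots> = (K * adj (emb a R x)) $$ (s,v)"
    using K s v by (auto simp: emb_def scalar_prod_def lessThan_atLeast0 intro!: sum.cong)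
  finally show "(adj (emb a R x) * kron (1\<^sub>m a) K) $$ (s,v) = (K * adj (emb a R x)) $$ (s,v)" .
qed (use K in \<open>auto simp: emb_def kron_def\<close>)

lemma emb_conj_kron: assumes K: "K \<in> carrier_mat R R" and M: "M \<in> carrier_mat (a*R) (a*R)"
  and x: "x < a" and x': "x' < a"
  shows "adj (emb a R x) * (kron (1\<^sub>m a) K * M * adj (kron (1\<^sub>m a) K)) * emb a R x'
       = K * (adj (emb a R x) * M * emb a R x') * adj K"
proof -
  define K' where "K' = kron (1\<^sub>m a) K"
  define Ex where "Ex = emb a R x"
  define Ey where "Ey = emb a R x'"
  have K': "K' \<in> carrier_mat (a*R) (a*R)" using K by (simp add: K'_def)
  have Ex: "Ex \<in> carrier_mat (a*R) R" and Ey: "Ey \<in> carrier_mat (a*R) R" by (auto simp: Ex_def Ey_def)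
  have aEx: "adj Ex \<in> carrier_mat R (a*R)" and aK': "adj K' \<in> carrier_mat (a*R) (a*R)"
    and aK: "adj K \<in> carrier_mat R R" using Ex K' K by auto
  have e1: "adj Ex * K' = K * adj Ex" unfolding Ex_def K'_def by (rule adj_emb_kron[OF K x])
  have "adj (adj Ey * K') = adj (K * adj Ey)" unfolding Ey_def K'_def using adj_emb_kron[OF K x'] by simp
  hence e2: "adj K' * Ey = Ey * adj K"
    using adj_mult[OF adj_carrier[OF Ey] K'] adj_mult[OF K adj_carrier[OF Ey]] by simp
  have c1: "K' * M \<in> carrier_mat (a*R) (a*R)" using K' M by simp
  have c2: "adj Ex * K' * M \<in> carrier_mat R (a*R)" using aEx K' M by simp
  have "adj Ex * (K' * M * adj K') * Ey = adj Ex * (K' * M) * adj K' * Ey"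
    using assoc_mult_mat[OF aEx c1 aK'] by simp
  also have "\<dots> = adj Ex * K' * M * adj K' * Ey" using assoc_mult_mat[OF aEx K' M] by simp
  also have "\<dots> = (adj Ex * K') * M * (adj K' * Ey)" using assoc_mult_mat[OF c2 aK' Ey] by simp
  finally have "adj Ex * (K' * M * adj K') * Ey = (adj Ex * K') * M * (adj K' * Ey)" .
  also have "\<dots> = K * adj Ex * M * (Ey * adj K)" using e1 e2 by simp
  also have "\<dots> = K * (adj Ex * M * Ey) * adj K"
  proof -
    have c3: "K * adj Ex * M \<in> carrier_mat R (a*R)" using K aEx M by simp
    have c4: "adj Ex * M \<in> carrier_mat R (a*R)" using aEx M by simp
    have e3: "K * adj Ex * M * (Ey * adj K) = K * adj Ex * M * Ey * adj K"
      using assoc_mult_mat[OF c3 Ey aK] by simp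
    have e4: "K * adj Ex * M = K * (adj Ex * M)" using assoc_mult_mat[OF K aEx M] .
    have e5: "K * (adj Ex * M) * Ey = K * (adj Ex * M * Ey)" using assoc_mult_mat[OF K c4 Ey] .
    show ?thesis by (subst e3) (simp only: e4 e5)
  qed
  finally show ?thesis by (simp add: K'_def Ex_def Ey_def)
qed

lemma msum_conj: assumes "\<forall>M\<in>set Ms. M \<in> carrier_mat N N" and A: "A \<in> carrier_mat r N" and B: "B \<in> carrier_mat N c"
  shows "A * msum N Ms * B = mat r c (\<lambda>(i,j). (\<Sum>M\<leftarrow>Ms. (A * M * B) $$ (i,j)))"
  using assms(1)
proof (induction Ms)
  case Nil
  show ?case using A B by (intro eq_matI) (auto simp: msum_Nil)
next
  case (Cons M Ms)
  have M: "M \<in> carrier_mat N N" using Cons.prems by simp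
  have S: "msum N Ms \<in> carrier_mat N N" by simp
  have "A * (M + msum N Ms) = A * M + A * msum N Ms" by (rule mult_add_distrib_mat[OF A M S])
  moreover have "(A * M + A * msum N Ms) * B = A * M * B + A * msum N Ms * B"
    by (rule add_mult_distrib_mat[OF _ _ B]) (use A M S in auto)
  ultimately have eq: "A * msum N (M # Ms) * B = A * M * B + A * msum N Ms * B"
    using M by (simp add: msum_Cons)
  have IH: "A * msum N Ms * B = mat r c (\<lambda>(i,j). (\<Sum>M\<leftarrow>Ms. (A * M * B) $$ (i,j)))"
    by (rule Cons.IH) (use Cons.prems in simp)
  show ?case unfolding eq
  proof (rule eq_matI)
    fix i j assume "i < dim_row (mat r c (\<lambda>(i,j). (\<Sum>M\<leftarrow>M # Ms. (A * M * B) $$ (i,j))))"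
      "j < dim_col (mat r c (\<lambda>(i,j). (\<Sum>M\<leftarrow>M # Ms. (A * M * B) $$ (i,j))))"
    hence i: "i < r" and j: "j < c" by auto
    have "(A * M * B + A * msum N Ms * B) $$ (i,j) = (A * M * B) $$ (i,j) + (A * msum N Ms * B) $$ (i,j)"
      using A B M i j by simp
    also have "(A * msum N Ms * B) $$ (i,j) = (\<Sum>M\<leftarrow>Ms. (A * M * B) $$ (i,j))"
      using IH i j by simp
    finally show "(A * M * B + A * msum N Ms * B) $$ (i,j) = mat r c (\<lambda>(i,j). (\<Sum>M\<leftarrow>M # Ms. (A * M * B) $$ (i,j))) $$ (i,j)"
      using i j by simp
  qed (use A B M in auto)
qed


lemma conj_carrier[simp]: "K \<in> carrier_mat n m \<Longrightarrow> M \<in> carrier_mat m m \<Longrightarrow> K * M * adj K \<in> carrier_mat n n"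
  by (metis adj_carrier mult_carrier_mat)

lemma tr_kraus_sum: assumes B: "B \<in> carrier_mat R R"
  shows "(\<forall>K\<in>set Ks. K \<in> carrier_mat R R) \<Longrightarrow>
    (\<Sum>K\<leftarrow>Ks. tr (K * B * adj K)) = tr (B * msum R (map (\<lambda>K. adj K * K) Ks))"
proof (induction Ks)
  case Nil
  show ?case using B by (simp add: msum_Nil tr_def)
next
  case (Cons K Ks)
  have K: "K \<in> carrier_mat R R" using Cons.prems by simp
  have aK: "adj K \<in> carrier_mat R R" using K by simp
  have BaK: "B * adj K \<in> carrier_mat R R" using mult_carrier_mat[OF B aK] .
  have KK: "adj K * K \<in> carrier_mat R R" using mult_carrier_mat[OF aK K] .
  have S: "msum R (map (\<lambda>K. adj K * K) Ks) \<in> carrier_mat R R" by simp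
  have "tr (K * B * adj K) = tr (K * (B * adj K))" using assoc_mult_mat[OF K B aK] by simp
  also have "\<dots> = tr (B * adj K * K)" using tr_mult_comm[OF K BaK] .
  also have "\<dots> = tr (B * (adj K * K))" using assoc_mult_mat[OF B aK K] by simp
  finally have t1: "tr (K * B * adj K) = tr (B * (adj K * K))" .
  have "tr (B * msum R (map (\<lambda>K. adj K * K) (K # Ks)))
      = tr (B * (adj K * K + msum R (map (\<lambda>K. adj K * K) Ks)))"
    using KK by (simp add: msum_Cons)
  also have "\<dots> = tr (B * (adj K * K)) + tr (B * msum R (map (\<lambda>K. adj K * K) Ks))"
    using mult_add_distrib_mat[OF B KK S] tr_add[of "B * (adj K * K)" R] B KK S by simp
  finally show ?case using t1 Cons by simp
qed

lemma ptrace_kraus: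
  assumes Ks: "kraus R Ks" and M: "M \<in> carrier_mat (a*R) (a*R)" and R: "0 < R"
  shows "ptrace2 R (apply_kraus (a*R) (map (\<lambda>K. kron (1\<^sub>m a) K) Ks) M) = ptrace2 R M"
proof -
  have Kc: "\<forall>K\<in>set Ks. K \<in> carrier_mat R R" and TP: "msum R (map (\<lambda>K. adj K * K) Ks) = 1\<^sub>m R"
    using Ks by (auto simp: kraus_def)
  define AK where "AK = apply_kraus (a*R) (map (\<lambda>K. kron (1\<^sub>m a) K) Ks) M"
  have AK: "AK \<in> carrier_mat (a*R) (a*R)" by (simp add: AK_def apply_kraus_def)
  show ?thesis unfolding AK_def[symmetric]
  proof (rule eq_matI)
    fix x x' assume "x < dim_row (ptrace2 R M)" "x' < dim_col (ptrace2 R M)"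
    hence x: "x < a" and x': "x' < a" using ptrace2_carrier[OF M R] by auto
    define Ex where "Ex = emb a R x"
    define Ey where "Ey = emb a R x'"
    define B where "B = adj Ex * M * Ey"
    have B: "B \<in> carrier_mat R R" unfolding B_def Ex_def Ey_def emb_block[OF M x x'] by simp
    have terms: "\<forall>N\<in>set (map (\<lambda>K'. K' * M * adj K') (map (\<lambda>K. kron (1\<^sub>m a) K) Ks)). N \<in> carrier_mat (a*R) (a*R)"
      using Kc M by (auto intro!: conj_carrier kron1_carrier)
    have "ptrace2 R AK $$ (x,x') = tr (adj Ex * AK * Ey)"
      unfolding Ex_def Ey_def by (rule ptrace2_emb[OF AK R x x'])
    also have "adj Ex * AK * Ey = msum R (map (\<lambda>N. adj Ex * N * Ey) (map (\<lambda>K'. K' * M * adj K') (map (\<lambda>K. kron (1\<^sub>m a) K) Ks)))"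
      unfolding AK_def apply_kraus_def
      by (subst msum_conj[OF terms]) (auto simp: Ex_def Ey_def msum_def comp_def)
    also have "map (\<lambda>N. adj Ex * N * Ey) (map (\<lambda>K'. K' * M * adj K') (map (\<lambda>K. kron (1\<^sub>m a) K) Ks))
        = map (\<lambda>K. K * B * adj K) Ks"
      using Kc emb_conj_kron[OF _ M x x'] by (auto simp: B_def Ex_def Ey_def)
    also have "tr (msum R (map (\<lambda>K. K * B * adj K) Ks)) = (\<Sum>K\<leftarrow>Ks. tr (K * B * adj K))"
      using Kc B by (subst tr_msum[of _ R]) (auto simp: comp_def)
    also have "\<dots> = tr (B * 1\<^sub>m R)" using tr_kraus_sum[OF B Kc] TP by simp
    also have "\<dots> = tr B" using right_mult_one_mat[OF B] by simp
    also have "\<dots> = ptrace2 R M $$ (x,x')"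
      using ptrace2_emb[OF M R x x'] by (simp add: B_def Ex_def Ey_def)
    finally show "ptrace2 R AK $$ (x,x') = ptrace2 R M $$ (x,x')" .
  qed (use ptrace2_carrier[OF AK R] ptrace2_carrier[OF M R] in auto)
qed


lemma sum_delta_divmod2:
  assumes d: "(0::nat) < d" and k: "k < d" and v: "v < l*d"
  shows "(\<Sum>j<l. if v = j*d+k then f j else 0) = (if v mod d = k then f (v div d) else (0::complex))"
proof -
  have "(\<Sum>j<l. if v = j*d+k then f j else 0) = (\<Sum>j<l. if v mod d = k \<and> j = v div d then f j else 0)"
  proof (intro sum.cong refl)
    fix j
    have "v = j*d+k \<longleftrightarrow> (v mod d = k \<and> j = v div d)"
    proof
      assume "v = j*d+k" thus "v mod d = k \<and> j = v div d" using k by simp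
    next
      assume "v mod d = k \<and> j = v div d" thus "v = j*d+k" by (metis div_mult_mod_eq)
    qed
    thus "(if v = j*d+k then f j else 0) = (if v mod d = k \<and> j = v div d then f j else 0)" by simp
  qed
  also have "\<dots> = (if v mod d = k then f (v div d) else 0)"
    using v d by (cases "v mod d = k") (auto simp: sum.delta' less_mult_imp_div_less)
  finally show ?thesis .
qed

lemma kronE_carrier[simp]: "E \<in> carrier_mat p l \<Longrightarrow> kron E (1\<^sub>m d) \<in> carrier_mat (p*d) (l*d)"
  by (auto simp: kron_def)

lemma adj_sel_kron: assumes E: "E \<in> carrier_mat p l" and k: "k < d"
  shows "adj (sel p d k) * kron E (1\<^sub>m d) = E * adj (sel l d k)"
proof (rule eq_matI)
  have F: "kron E (1\<^sub>m d) \<in> carrier_mat (p*d) (l*d)" using E by simp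
  fix i v assume "i < dim_row (E * adj (sel l d k))" "v < dim_col (E * adj (sel l d k))"
  hence i: "i < p" and v: "v < l*d" using E by (auto simp: sel_def)
  have d: "0 < d" using k by simp
  have vd: "v div d < l" using v by (simp add: less_mult_imp_div_less)
  have "(adj (sel p d k) * kron E (1\<^sub>m d)) $$ (i,v) = kron E (1\<^sub>m d) $$ (i*d+k, v)"
    by (subst adj_sel_mult[OF F k]) (use i v in auto)
  also have "\<dots> = (if v mod d = k then E $$ (i, v div d) else 0)"
    using E i v k vd idx_lt[OF i k] unfolding kron_def by auto
  also have "\<dots> = (\<Sum>j<l. if v = j*d+k then E $$ (i,j) else 0)"
    using sum_delta_divmod2[OF d k v, of "\<lambda>j. E $$ (i,j)"] by simp
  also have "\<dots> = (E * adj (sel l d k)) $$ (i,v)"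
    using E i v by (auto simp: sel_def scalar_prod_def lessThan_atLeast0 intro!: sum.cong)
  finally show "(adj (sel p d k) * kron E (1\<^sub>m d)) $$ (i,v) = (E * adj (sel l d k)) $$ (i,v)" .
qed (use E in \<open>auto simp: sel_def kron_def\<close>)

lemma ptrace2_enc: assumes E: "E \<in> carrier_mat p l" and S: "S \<in> carrier_mat (l*d) (l*d)" and d: "0 < d"
  shows "ptrace2 d (kron E (1\<^sub>m d) * S * adj (kron E (1\<^sub>m d))) = E * ptrace2 d S * adj E"
proof -
  define F where "F = kron E (1\<^sub>m d)"
  have F: "F \<in> carrier_mat (p*d) (l*d)" using E by (simp add: F_def)
  have aF: "adj F \<in> carrier_mat (l*d) (p*d)" using F by simp
  have aE: "adj E \<in> carrier_mat l p" using E by simp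
  have enc: "F * S * adj F \<in> carrier_mat (p*d) (p*d)" using F S by simp
  have blk: "adj (sel p d k) * (F * S * adj F) * sel p d k = E * (adj (sel l d k) * S * sel l d k) * adj E"
    if k: "k < d" for k
  proof -
    define Sp where "Sp = sel p d k"
    define Sl where "Sl = sel l d k"
    have Sp: "Sp \<in> carrier_mat (p*d) p" and Sl: "Sl \<in> carrier_mat (l*d) l" by (auto simp: Sp_def Sl_def)
    have aSp: "adj Sp \<in> carrier_mat p (p*d)" and aSl: "adj Sl \<in> carrier_mat l (l*d)" using Sp Sl by auto
    have e1: "adj Sp * F = E * adj Sl" unfolding Sp_def Sl_def F_def by (rule adj_sel_kron[OF E k])
    have "adj (adj Sp * F) = adj (E * adj Sl)" using e1 by simp
    hence e2: "adj F * Sp = Sl * adj E"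
      using adj_mult[OF aSp F] adj_mult[OF E aSl] by simp
    have c1: "F * S \<in> carrier_mat (p*d) (l*d)" using F S by simp
    have c2: "adj Sp * F * S \<in> carrier_mat p (l*d)" using aSp F S by simp
    have "adj Sp * (F * S * adj F) * Sp = adj Sp * (F * S) * adj F * Sp"
      using assoc_mult_mat[OF aSp c1 aF] by simp
    also have "\<dots> = adj Sp * F * S * adj F * Sp" using assoc_mult_mat[OF aSp F S] by simp
    also have "\<dots> = (adj Sp * F) * S * (adj F * Sp)" using assoc_mult_mat[OF c2 aF Sp] by simp
    also have "\<dots> = E * adj Sl * S * (Sl * adj E)" using e1 e2 by simp
    also have "\<dots> = E * (adj Sl * S * Sl) * adj E"
    proof -
      have c3: "E * adj Sl * S \<in> carrier_mat p (l*d)" using E aSl S by simp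
      have c4: "adj Sl * S \<in> carrier_mat l (l*d)" using aSl S by simp
      have e3: "E * adj Sl * S * (Sl * adj E) = E * adj Sl * S * Sl * adj E"
        using assoc_mult_mat[OF c3 Sl aE] by simp
      have e4: "E * adj Sl * S = E * (adj Sl * S)" using assoc_mult_mat[OF E aSl S] .
      have e5: "E * (adj Sl * S) * Sl = E * (adj Sl * S * Sl)" using assoc_mult_mat[OF E c4 Sl] .
      show ?thesis by (subst e3) (simp only: e4 e5)
    qed
    finally show ?thesis by (simp add: Sp_def Sl_def)
  qed
  have "ptrace2 d (F * S * adj F) = msum p (map (\<lambda>k. adj (sel p d k) * (F * S * adj F) * sel p d k) [0..<d])"
    using ptrace2_sel[OF enc d] .
  also have "\<dots> = msum p (map (\<lambda>k. E * (adj (sel l d k) * S * sel l d k) * adj E) [0..<d])"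
    using blk by (intro arg_cong[where f="msum p"] map_cong) auto
  also have "\<dots> = E * msum l (map (\<lambda>k. adj (sel l d k) * S * sel l d k) [0..<d]) * adj E"
  proof -
    have terms: "\<forall>N\<in>set (map (\<lambda>k. adj (sel l d k) * S * sel l d k) [0..<d]). N \<in> carrier_mat l l"
      using S by (auto simp: sel_entry)
    show ?thesis
      by (subst msum_conj[OF terms E aE]) (auto simp: msum_def comp_def)
  qed
  also have "msum l (map (\<lambda>k. adj (sel l d k) * S * sel l d k) [0..<d]) = ptrace2 d S"
    using ptrace2_sel[OF S d] by simp
  finally show ?thesis by (simp add: F_def)
qed


lemma density_dim_pos: "density N M \<Longrightarrow> 0 < N"
  by (cases N) (auto simp: density_def tr_def)

lemma iso_dim_pos: assumes E: "E \<in> carrier_mat n l" and iso: "adj E * E = 1\<^sub>m l" and l: "0 < l"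
  shows "0 < n"
proof (rule ccontr)
  assume "\<not> 0 < n" hence n: "n = 0" by simp
  have "(adj E * E) $$ (0,0) = 0" using E n l by (simp add: scalar_prod_def)
  moreover have "(1\<^sub>m l :: complex mat) $$ (0,0) = 1" using l by simp
  ultimately show False using iso by simp
qed

lemma proj_range: assumes PC: "orth_proj N PC" and C: "C = {PC *\<^sub>v v | v. v \<in> carrier_vec N}"
  and E: "E \<in> carrier_mat N l" and rng: "(\<lambda>v. E *\<^sub>v v) ` carrier_vec l = C"
  shows "PC * E = E"
proof -
  have P: "PC \<in> carrier_mat N N" and PP: "PC * PC = PC" using PC by (auto simp: orth_proj_def)
  show ?thesis
  proof (rule mat_eq_vecI[of _ N l])
    show "PC * E \<in> carrier_mat N l" using P E by simp
    show "E \<in> carrier_mat N l" by fact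
    fix x :: "complex vec" assume x: "x \<in> carrier_vec l"
    have "E *\<^sub>v x \<in> C" using rng x by blast
    then obtain v where v: "v \<in> carrier_vec N" and Ex: "E *\<^sub>v x = PC *\<^sub>v v" using C by blast
    have "(PC * E) *\<^sub>v x = PC *\<^sub>v (E *\<^sub>v x)" using P E x by simp
    also have "\<dots> = (PC * PC) *\<^sub>v v" using Ex P v by simp
    also have "\<dots> = E *\<^sub>v x" using PP Ex by simp
    finally show "(PC * E) *\<^sub>v x = E *\<^sub>v x" .
  qed
qed

lemma tr_conj_iso: assumes E: "E \<in> carrier_mat n l" and iso: "adj E * E = 1\<^sub>m l" and T: "T \<in> carrier_mat l l"
  shows "tr (E * T * adj E) = tr T"
proof -
  have aE: "adj E \<in> carrier_mat l n" using E by simp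
  have TaE: "T * adj E \<in> carrier_mat l n" using T aE by simp
  have "tr (E * T * adj E) = tr (E * (T * adj E))" using assoc_mult_mat[OF E T aE] by simp
  also have "\<dots> = tr (T * adj E * E)" using tr_mult_comm[OF E TaE] .
  also have "\<dots> = tr (T * (adj E * E))" using assoc_mult_mat[OF T aE E] by simp
  also have "\<dots> = tr T" using iso T by simp
  finally show ?thesis .
qed

lemma dir1:
  assumes PC: "orth_proj (dA*dB) PC" and C: "C = {PC *\<^sub>v v | v. v \<in> carrier_vec (dA*dB)}"
   and E: "E \<in> carrier_mat (dA*dB) dL" and iso: "adj E * E = 1\<^sub>m dL" and rng: "(\<lambda>v. E *\<^sub>v v) ` carrier_vec dL = C"
   and dX: "0 < dX" and sig: "density (dL*dX) \<sigma>" and Ks: "kraus (dB*dX) Ks"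
  shows "experiment_outcome dA E dX \<sigma> Ks \<in> ST_B dA dB PC"
proof -
  define n where "n = dA*dB"
  define R where "R = dB*dX"
  have dL: "0 < dL" using density_dim_pos[OF sig] by simp
  have n0: "0 < n" using iso_dim_pos[OF E iso dL] by (simp add: n_def)
  have dB: "0 < dB" and dA: "0 < dA" using n0 by (auto simp: n_def)
  have R0: "0 < R" using dB dX by (simp add: R_def)
  have dimE: "dim_row E = n" using E by (simp add: n_def)
  have Sc: "\<sigma> \<in> carrier_mat (dL*dX) (dL*dX)" using sig by (simp add: density_def)
  have pS: "pos (dL*dX) \<sigma>" and tS: "tr \<sigma> = 1" using sig by (auto simp: density_pos)
  define F where "F = kron E (1\<^sub>m dX)"
  have F: "F \<in> carrier_mat (n*dX) (dL*dX)" using E by (simp add: F_def n_def)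
  define enc where "enc = F * \<sigma> * adj F"
  have encc: "enc \<in> carrier_mat (n*dX) (n*dX)" using F Sc by (simp add: enc_def)
  have pE: "pos (n*dX) enc" unfolding enc_def by (rule pos_conj[OF pS F])
  define \<tau> where "\<tau> = ptrace2 dX \<sigma>"
  have tau: "density dL \<tau>" unfolding \<tau>_def by (rule density_ptrace2[OF sig dX])
  have tauc: "\<tau> \<in> carrier_mat dL dL" using tau by (simp add: density_def)
  define \<rho>' where "\<rho>' = ptrace2 dX enc"
  have rho'eq: "\<rho>' = E * \<tau> * adj E"
    unfolding \<rho>'_def enc_def F_def \<tau>_def using ptrace2_enc[OF E Sc dX] .
  have trrho': "tr \<rho>' = 1" using tr_conj_iso[OF E iso tauc] tau rho'eq by (simp add: density_def)
  have pR': "pos n \<rho>'" unfolding \<rho>'_def by (rule pos_ptrace2[OF pE dX])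
  have trenc: "tr enc = 1" using tr_ptrace2[OF encc dX] trrho' by (simp add: \<rho>'_def)
  have PCE: "PC * E = E" by (rule proj_range[OF PC C E rng])
  have Pc: "PC \<in> carrier_mat (dA*dB) (dA*dB)" using PC by (simp add: orth_proj_def)
  have aE: "adj E \<in> carrier_mat dL (dA*dB)" using E by simp
  have "PC * \<rho>' = PC * E * \<tau> * adj E"
  proof -
    have c: "E * \<tau> \<in> carrier_mat (dA*dB) dL" using E tauc by simp
    have "PC * (E * \<tau> * adj E) = PC * (E * \<tau>) * adj E" using assoc_mult_mat[OF Pc c aE] by simp
    also have "PC * (E * \<tau>) = PC * E * \<tau>" using assoc_mult_mat[OF Pc E tauc] by simp
    finally show ?thesis using rho'eq by simp
  qed
  hence "tr (PC * \<rho>') = 1" using PCE rho'eq trrho' by simp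
  hence st: "state_in (dA*dB) PC \<rho>'" using pR' trrho' by (auto simp: state_in_def density_pos n_def)
  define Ks' where "Ks' = map (\<lambda>K. kron (1\<^sub>m dA) K) Ks"
  define AK where "AK = apply_kraus (dim_row E * dX) Ks' enc"
  have nR: "n * dX = dA * R" by (simp add: n_def R_def)
  have Kc: "\<forall>K\<in>set Ks. K \<in> carrier_mat R R" using Ks by (simp add: kraus_def R_def)
  have K'c: "\<forall>K\<in>set Ks'. K \<in> carrier_mat (n*dX) (n*dX)" using Kc nR by (auto simp: Ks'_def)
  have AKc: "AK \<in> carrier_mat (n*dX) (n*dX)" by (simp add: AK_def apply_kraus_def dimE)
  have pAK: "pos (n*dX) AK" unfolding AK_def dimE by (rule pos_apply_kraus[OF pE K'c])
  have encR: "enc \<in> carrier_mat (dA*R) (dA*R)" using encc nR by simp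
  have AKR: "AK \<in> carrier_mat (dA*R) (dA*R)" using AKc nR by simp
  have ptK: "ptrace2 R AK = ptrace2 R enc"
    unfolding AK_def Ks'_def dimE nR using ptrace_kraus[of R Ks enc dA] Ks encR R0 by (simp add: R_def)
  have trAK: "tr AK = 1"
    using tr_ptrace2[OF AKR R0] tr_ptrace2[OF encR R0] ptK trenc by simp
  define Out where "Out = ptrace2 dX AK"
  have dOut: "density (dA*dB) Out"
    unfolding Out_def density_pos using pos_ptrace2[OF pAK dX] tr_ptrace2[OF AKc dX] trAK by (simp add: n_def)
  have AK3: "AK \<in> carrier_mat (dA*dB*dX) (dA*dB*dX)" using AKc by (simp add: n_def)
  have enc3: "enc \<in> carrier_mat (dA*dB*dX) (dA*dB*dX)" using encc by (simp add: n_def)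
  have "ptrace2 dB Out = ptrace2 R AK" unfolding Out_def R_def using ptrace2_ptrace2[OF AK3 dB dX] .
  also have "\<dots> = ptrace2 R enc" by (rule ptK)
  also have "\<dots> = ptrace2 dB \<rho>'" unfolding \<rho>'_def R_def using ptrace2_ptrace2[OF enc3 dB dX] by simp
  finally have "ptrace2 dB Out = ptrace2 dB \<rho>'" .
  moreover have "experiment_outcome dA E dX \<sigma> Ks = Out"
    by (simp add: experiment_outcome_def Out_def AK_def Ks'_def enc_def F_def)
  ultimately show ?thesis using dOut st unfolding ST_B_def by auto
qed


lemma tr_minus: "A \<in> carrier_mat N N \<Longrightarrow> B \<in> carrier_mat N N \<Longrightarrow> tr (A - B) = tr A - tr B"
  by (simp add: tr_def sum_subtractf)

lemma conj_outer: assumes A: "A \<in> carrier_mat m N" and x: "x \<in> carrier_vec N"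
  shows "A * outer x x * adj A = outer (A *\<^sub>v x) (A *\<^sub>v x)"
proof -
  have "A * outer x x = outer (A *\<^sub>v x) x" by (rule mult_outer[OF A x])
  moreover have "outer (A *\<^sub>v x) x * adj A = outer (A *\<^sub>v x) (adj (adj A) *\<^sub>v x)"
    by (rule outer_mult[OF x adj_carrier[OF A]])
  ultimately show ?thesis by simp
qed

lemma density_outer: assumes s: "s \<in> carrier_vec N" and t: "ip s s = 1"
  shows "density N (outer s s)"
proof -
  have O: "outer s s \<in> carrier_mat N N" using outer_carrier[of s s] s by simp
  have q: "qf (outer s s) v = ip v s * cnj (ip v s)" if v: "v \<in> carrier_vec N" for v
  proof -
    have "ip s v = cnj (ip v s)" using ip_cnj[of v s] v s by simp
    thus ?thesis using outer_mult_vec[of v s s] v s ip_smult_left by (simp add: qf_def)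
  qed
  have "psd N (outer s s)" unfolding psd_qf using O q by (auto simp: complex_mult_cnj)
  moreover have "tr (outer s s) = ip s s" using s by (simp add: tr_def ip_def)
  ultimately show ?thesis using O t by (simp add: density_def)
qed

lemma kron1_mult_vec: assumes K: "K \<in> carrier_mat N N" and x: "x \<in> carrier_vec (a*N)" and i: "i < a*N"
  shows "(kron (1\<^sub>m a) K *\<^sub>v x) $ i = (K *\<^sub>v vec N (\<lambda>t. x $ ((i div N)*N + t))) $ (i mod N)"
proof -
  have N: "0 < N" using i by (cases N) auto
  have id: "i div N < a" using i by (simp add: less_mult_imp_div_less)
  have im: "i mod N < N" using N by simp
  have "(kron (1\<^sub>m a) K *\<^sub>v x) $ i = (\<Sum>v<a*N. kron (1\<^sub>m a) K $$ (i,v) * x $ v)"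
  proof -
    have dr: "dim_row (kron (1\<^sub>m a) K) = a*N" "dim_col (kron (1\<^sub>m a) K) = a*N"
      using kron1_carrier[OF K, of a] by auto
    have dx: "dim_vec x = a*N" using x by simp
    show ?thesis unfolding index_mult_mat_vec[of i "kron (1\<^sub>m a) K" x, unfolded dr, OF i]
      scalar_prod_def dx lessThan_atLeast0 using dr i by (intro sum.cong refl) simp
  qed
  also have "\<dots> = (\<Sum>y<a. \<Sum>t<N. kron (1\<^sub>m a) K $$ (i, y*N+t) * x $ (y*N+t))" by (rule sum_split)
  also have "\<dots> = (\<Sum>y<a. if y = i div N then (\<Sum>t<N. K $$ (i mod N, t) * x $ (y*N+t)) else 0)"
    by (intro sum.cong refl) (use K i idx_lt index_kron1 in auto)
  also have "\<dots> = (\<Sum>t<N. K $$ (i mod N, t) * x $ ((i div N)*N+t))" using id by simp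
  also have "\<dots> = (K *\<^sub>v vec N (\<lambda>t. x $ ((i div N)*N + t))) $ (i mod N)"
    using K im by (simp add: scalar_prod_def lessThan_atLeast0)
  finally show ?thesis .
qed

lemma kronE_mult_vec: assumes E: "E \<in> carrier_mat p l" and s: "s \<in> carrier_vec (l*d)" and i: "i < p*d"
  shows "(kron E (1\<^sub>m d) *\<^sub>v s) $ i = (E *\<^sub>v vec l (\<lambda>j. s $ (j*d + i mod d))) $ (i div d)"
proof -
  have d: "0 < d" using i by (cases d) auto
  have id: "i div d < p" using i by (simp add: less_mult_imp_div_less)
  have im: "i mod d < d" using d by simp
  have "(kron E (1\<^sub>m d) *\<^sub>v s) $ i = (\<Sum>v<l*d. kron E (1\<^sub>m d) $$ (i,v) * s $ v)"
  proof -
    have dr: "dim_row (kron E (1\<^sub>m d)) = p*d" "dim_col (kron E (1\<^sub>m d)) = l*d"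
      using kronE_carrier[OF E, of d] by auto
    have dx: "dim_vec s = l*d" using s by simp
    show ?thesis unfolding index_mult_mat_vec[of i "kron E (1\<^sub>m d)" s, unfolded dr, OF i]
      scalar_prod_def dx lessThan_atLeast0 using dr i by (intro sum.cong refl) simp
  qed
  also have "\<dots> = (\<Sum>j<l. \<Sum>y<d. kron E (1\<^sub>m d) $$ (i, j*d+y) * s $ (j*d+y))" by (rule sum_split)
  also have "\<dots> = (\<Sum>j<l. \<Sum>y<d. if y = i mod d then E $$ (i div d, j) * s $ (j*d+y) else 0)"
    by (intro sum.cong refl) (use E i idx_lt id in \<open>auto simp: kron_def\<close>)
  also have "\<dots> = (\<Sum>j<l. E $$ (i div d, j) * s $ (j*d + i mod d))" using im by simp
  also have "\<dots> = (E *\<^sub>v vec l (\<lambda>j. s $ (j*d + i mod d))) $ (i div d)"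
    using E id by (simp add: scalar_prod_def lessThan_atLeast0)
  finally show ?thesis .
qed


lemma support_in_range:
  assumes PC: "orth_proj n PC" and rho: "density n \<rho>" and trP: "tr (PC * \<rho>) = 1"
    and g: "\<forall>i<n. \<forall>j<n. \<rho> $$ (i,j) = (\<Sum>k<n. g k i * cnj (g k j))"
    and k: "k < n"
  shows "PC *\<^sub>v vec n (g k) = vec n (g k)"
proof -
  have P: "PC \<in> carrier_mat n n" and aP: "adj PC = PC" and PP: "PC * PC = PC" using PC by (auto simp: orth_proj_def)
  have R: "\<rho> \<in> carrier_mat n n" and trR: "tr \<rho> = 1" using rho by (auto simp: density_def)
  define Q where "Q = 1\<^sub>m n - PC"
  have Q: "Q \<in> carrier_mat n n" by (simp add: Q_def minus_carrier_mat[OF P])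
  have aQ: "adj Q = Q" unfolding Q_def using adj_minus[of "1\<^sub>m n" n n PC] P aP by simp
  have Qv: "Q *\<^sub>v x = x - PC *\<^sub>v x" if x: "x \<in> carrier_vec n" for x
    unfolding Q_def using minus_mult_distrib_mat_vec[of "1\<^sub>m n" n n PC x] P x by simp
  have QQ: "Q *\<^sub>v (Q *\<^sub>v x) = Q *\<^sub>v x" if x: "x \<in> carrier_vec n" for x
  proof -
    have Px: "PC *\<^sub>v x \<in> carrier_vec n" using P x by simp
    have PPx: "PC *\<^sub>v (PC *\<^sub>v x) = PC *\<^sub>v x" using PP P x by (metis assoc_mult_mat_vec)
    have "Q *\<^sub>v (Q *\<^sub>v x) = (x - PC *\<^sub>v x) - PC *\<^sub>v (x - PC *\<^sub>v x)" using Qv x Px by simp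
    also have "PC *\<^sub>v (x - PC *\<^sub>v x) = PC *\<^sub>v x - PC *\<^sub>v (PC *\<^sub>v x)"
      using mult_minus_distrib_mat_vec[OF P x Px] .
    finally show ?thesis using Qv[OF x] PPx x Px by (intro eq_vecI) auto
  qed
  define w where "w k = vec n (g k)" for k
  have w: "w k \<in> carrier_vec n" for k by (simp add: w_def)
  have "tr (Q * \<rho>) = tr \<rho> - tr (PC * \<rho>)"
    unfolding Q_def using minus_mult_distrib_mat[of "1\<^sub>m n" n n PC \<rho> n] P R tr_minus[of \<rho> n "PC * \<rho>"]
    by simp
  hence tr0: "tr (Q * \<rho>) = 0" using trR trP by simp
  have "tr (Q * \<rho>) = (\<Sum>i<n. \<Sum>l<n. Q $$ (i,l) * (\<Sum>k<n. g k l * cnj (g k i)))"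
    unfolding tr_def using Q R g by (simp add: scalar_prod_def lessThan_atLeast0)
  also have "\<dots> = (\<Sum>i<n. \<Sum>l<n. \<Sum>k<n. Q $$ (i,l) * g k l * cnj (g k i))"
    by (simp add: sum_distrib_left mult_ac)
  also have "\<dots> = (\<Sum>i<n. \<Sum>k<n. \<Sum>l<n. Q $$ (i,l) * g k l * cnj (g k i))"
    by (rule sum.cong[OF refl]) (rule sum.swap)
  also have "\<dots> = (\<Sum>k<n. \<Sum>i<n. \<Sum>l<n. Q $$ (i,l) * g k l * cnj (g k i))"
    by (rule sum.swap)
  also have "\<dots> = (\<Sum>k<n. ip (Q *\<^sub>v w k) (w k))"
  proof (rule sum.cong[OF refl])
    fix k assume "k \<in> {..<n}"
    have d: "dim_vec (Q *\<^sub>v w k) = n" using Q by (simp add: w_def)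
    show "(\<Sum>i<n. \<Sum>l<n. Q $$ (i,l) * g k l * cnj (g k i)) = ip (Q *\<^sub>v w k) (w k)"
      unfolding ip_def d using Q by (intro sum.cong refl) (simp add: w_def scalar_prod_def lessThan_atLeast0 sum_distrib_right)
  qed
  finally have s0: "(\<Sum>k<n. ip (Q *\<^sub>v w k) (w k)) = 0" using tr0 by simp
  have trm: "ip (Q *\<^sub>v w k) (w k) = ip (Q *\<^sub>v w k) (Q *\<^sub>v w k)" for k
  proof -
    have Qw: "Q *\<^sub>v w k \<in> carrier_vec n" using Q w by simp
    have "ip (Q *\<^sub>v w k) (w k) = ip (Q *\<^sub>v (Q *\<^sub>v w k)) (w k)" using QQ[OF w] by simp
    also have "\<dots> = ip (Q *\<^sub>v w k) (adj Q *\<^sub>v w k)" by (rule ip_adj[OF Q Qw w])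
    finally show ?thesis using aQ by simp
  qed
  define a where "a k = (\<Sum>i<dim_vec (Q *\<^sub>v w k). (cmod ((Q *\<^sub>v w k) $ i))\<^sup>2)" for k
  have a0: "a k \<ge> 0" for k by (simp add: a_def sum_nonneg)
  have "complex_of_real (\<Sum>k<n. a k) = 0" using s0 trm by (simp add: ip_self a_def)
  hence "(\<Sum>k<n. a k) = 0" by (metis of_real_eq_0_iff)
  hence "a k = 0" using k a0 by (simp add: sum_nonneg_eq_0_iff)
  hence "ip (Q *\<^sub>v w k) (Q *\<^sub>v w k) = 0" by (simp add: ip_self a_def)
  hence "Q *\<^sub>v w k = 0\<^sub>v n" using ip_self_eq_0[of "Q *\<^sub>v w k" n] Q w by simp
  hence e: "w k - PC *\<^sub>v w k = 0\<^sub>v n" using Qv[OF w] by simp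
  have wk: "w k \<in> carrier_vec n" by (rule w)
  have PW: "PC *\<^sub>v w k \<in> carrier_vec n" using P wk by simp
  show ?thesis unfolding w_def[symmetric]
  proof (rule eq_vecI)
    fix i assume "i < dim_vec (w k)" hence i: "i < n" using wk by simp
    have "(w k - PC *\<^sub>v w k) $ i = 0" using e i by simp
    moreover have "(w k - PC *\<^sub>v w k) $ i = w k $ i - (PC *\<^sub>v w k) $ i"
      using i PW by (simp only: index_minus_vec carrier_vecD)
    ultimately show "(PC *\<^sub>v w k) $ i = w k $ i" by simp
  qed (use wk PW P in simp)
qed


lemma ptrace_outer_chol:
  assumes M: "M \<in> carrier_mat n n" and n: "0 < n"
    and h: "\<forall>i<n. \<forall>j<n. M $$ (i,j) = (\<Sum>k<n. h k i * cnj (h k j))"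
  shows "ptrace2 n (outer (vec (n*n) (\<lambda>i. h (i mod n) (i div n))) (vec (n*n) (\<lambda>i. h (i mod n) (i div n)))) = M"
    (is "ptrace2 n (outer ?P ?P) = M")
proof -
  have O: "outer ?P ?P \<in> carrier_mat (n*n) (n*n)" using outer_carrier[of ?P ?P] by simp
  show ?thesis
  proof (rule eq_matI)
    fix p q assume "p < dim_row M" "q < dim_col M"
    hence p: "p < n" and q: "q < n" using M by auto
    have "ptrace2 n (outer ?P ?P) $$ (p,q) = (\<Sum>k<n. outer ?P ?P $$ (p*n+k, q*n+k))"
      by (rule index_ptrace2[OF O n p q])
    also have "\<dots> = (\<Sum>k<n. h k p * cnj (h k q))"
      by (intro sum.cong refl) (use p q idx_lt in auto)
    also have "\<dots> = M $$ (p,q)" using h p q by simp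
    finally show "ptrace2 n (outer ?P ?P) $$ (p,q) = M $$ (p,q)" .
  qed (use ptrace2_carrier[OF O n] M in auto)
qed

lemma gram_ptrace:
  assumes P: "P \<in> carrier_vec (dA*dB*n)" and dB: "0 < dB" and n: "0 < n" and a: "a < dA" and b: "b < dA"
  shows "ip (vec (dB*n) (\<lambda>r. P $ (a*(dB*n) + r))) (vec (dB*n) (\<lambda>r. P $ (b*(dB*n) + r)))
     = ptrace2 dB (ptrace2 n (outer P P)) $$ (a,b)"
proof -
  have O: "outer P P \<in> carrier_mat (dA*dB*n) (dA*dB*n)" using outer_carrier[of P P] P by simp
  have O2: "outer P P \<in> carrier_mat (dA*(dB*n)) (dA*(dB*n))" using O by (simp add: mult.assoc)
  have Pd: "dim_vec P = dA*(dB*n)" using P by (simp add: mult.assoc)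
  have "ptrace2 dB (ptrace2 n (outer P P)) = ptrace2 (dB*n) (outer P P)" by (rule ptrace2_ptrace2[OF O dB n])
  moreover have "ptrace2 (dB*n) (outer P P) $$ (a,b) = (\<Sum>r<dB*n. outer P P $$ (a*(dB*n)+r, b*(dB*n)+r))"
    by (rule index_ptrace2[OF O2 _ a b]) (use dB n in simp)
  moreover have "\<dots> = ip (vec (dB*n) (\<lambda>r. P $ (a*(dB*n) + r))) (vec (dB*n) (\<lambda>r. P $ (b*(dB*n) + r)))"
    unfolding ip_def by (intro sum.cong refl) (use a b idx_lt Pd in auto)
  ultimately show ?thesis by simp
qed

lemma kron_apply_vec:
  assumes K: "K \<in> carrier_mat N N" and P: "P \<in> carrier_vec (a*N)" and S: "S \<in> carrier_vec (a*N)"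
    and eq: "\<forall>x<a. K *\<^sub>v vec N (\<lambda>r. P $ (x*N+r)) = vec N (\<lambda>r. S $ (x*N+r))"
  shows "kron (1\<^sub>m a) K *\<^sub>v P = S"
proof (rule eq_vecI)
  fix i assume "i < dim_vec S" hence i: "i < a*N" using S by simp
  have N: "0 < N" using i by (cases N) auto
  have id: "i div N < a" using i by (simp add: less_mult_imp_div_less)
  have im: "i mod N < N" using N by simp
  have "(kron (1\<^sub>m a) K *\<^sub>v P) $ i = (K *\<^sub>v vec N (\<lambda>t. P $ ((i div N)*N + t))) $ (i mod N)"
    by (rule kron1_mult_vec[OF K P i])
  also have "\<dots> = S $ ((i div N)*N + i mod N)" using eq id im by simp
  also have "(i div N)*N + i mod N = i" by simp
  finally show "(kron (1\<^sub>m a) K *\<^sub>v P) $ i = S $ i" .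
qed (use K S in \<open>auto simp: kron_def\<close>)


lemma proj_compl:
  assumes K: "K \<in> carrier_mat N N" and proj: "adj K * K * (adj K * K) = adj K * K"
  defines "Q \<equiv> 1\<^sub>m N - adj K * K"
  shows "kraus N [K, Q]" and "\<And>x. x \<in> carrier_vec N \<Longrightarrow> Q *\<^sub>v x = x - (adj K * K) *\<^sub>v x"
proof -
  define P where "P = adj K * K"
  have P: "P \<in> carrier_mat N N" using K by (metis P_def adj_carrier mult_carrier_mat)
  have aP: "adj P = P" unfolding P_def using adj_mult[OF adj_carrier[OF K] K] by simp
  have PP: "P * P = P" using proj by (simp add: P_def)
  have Qc: "Q \<in> carrier_mat N N" unfolding Q_def P_def[symmetric] using minus_carrier_mat[OF P] .
  have Qv: "Q *\<^sub>v x = x - P *\<^sub>v x" if x: "x \<in> carrier_vec N" for x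
    unfolding Q_def P_def[symmetric] using minus_mult_distrib_mat_vec[of "1\<^sub>m N" N N P x] P x by simp
  thus "\<And>x. x \<in> carrier_vec N \<Longrightarrow> Q *\<^sub>v x = x - (adj K * K) *\<^sub>v x" by (simp add: P_def)
  have aQ: "adj Q = Q" unfolding Q_def P_def[symmetric] using adj_minus[of "1\<^sub>m N" N N P] P aP by simp
  have QQ: "Q * Q = Q"
  proof (rule mat_eq_vecI[of _ N N])
    show "Q * Q \<in> carrier_mat N N" using Qc by simp
    show "Q \<in> carrier_mat N N" by fact
    fix x :: "complex vec" assume x: "x \<in> carrier_vec N"
    have Px: "P *\<^sub>v x \<in> carrier_vec N" using P x by simp
    have PPx: "P *\<^sub>v (P *\<^sub>v x) = P *\<^sub>v x" using PP P x by (metis assoc_mult_mat_vec)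
    have "(Q * Q) *\<^sub>v x = Q *\<^sub>v (Q *\<^sub>v x)" using Qc x by simp
    also have "\<dots> = (x - P *\<^sub>v x) - P *\<^sub>v (x - P *\<^sub>v x)" using Qv x Px by simp
    also have "P *\<^sub>v (x - P *\<^sub>v x) = P *\<^sub>v x - P *\<^sub>v (P *\<^sub>v x)"
      using mult_minus_distrib_mat_vec[OF P x Px] .
    finally show "(Q * Q) *\<^sub>v x = Q *\<^sub>v x" using Qv[OF x] PPx x Px by (intro eq_vecI) auto
  qed
  show "kraus N [K, Q]"
    unfolding kraus_def
  proof (intro conjI ballI)
    fix M assume "M \<in> set [K, Q]" thus "M \<in> carrier_mat N N" using K Qc by auto
  next
    show "msum N (map (\<lambda>K. adj K * K) [K, Q]) = 1\<^sub>m N"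
    proof (rule eq_matI)
      fix i j assume "i < dim_row (1\<^sub>m N :: complex mat)" "j < dim_col (1\<^sub>m N :: complex mat)"
      hence i: "i < N" and j: "j < N" by auto
      have "msum N (map (\<lambda>K. adj K * K) [K, Q]) $$ (i,j) = P $$ (i,j) + Q $$ (i,j)"
        using i j aQ QQ by (simp add: P_def)
      also have "\<dots> = (1\<^sub>m N :: complex mat) $$ (i,j)" using i j P by (simp add: Q_def P_def[symmetric])
      finally show "msum N (map (\<lambda>K. adj K * K) [K, Q]) $$ (i,j) = (1\<^sub>m N :: complex mat) $$ (i,j)" .
    qed auto
  qed
qed


lemma dir2:
  assumes PC: "orth_proj (dA*dB) PC" and C: "C = {PC *\<^sub>v v | v. v \<in> carrier_vec (dA*dB)}"
   and E: "E \<in> carrier_mat (dA*dB) dL" and iso: "adj E * E = 1\<^sub>m dL" and rng: "(\<lambda>v. E *\<^sub>v v) ` carrier_vec dL = C"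
   and rho: "\<rho> \<in> ST_B dA dB PC"
  shows "\<exists>dX \<sigma> Ks. \<rho> = experiment_outcome dA E dX \<sigma> Ks \<and> 0 < dX \<and> density (dL*dX) \<sigma> \<and> kraus (dB*dX) Ks"
proof -
  define n where "n = dA*dB"
  from rho obtain \<rho>' where dR: "density n \<rho>" and st: "state_in n PC \<rho>'" and eqA: "ptrace2 dB \<rho> = ptrace2 dB \<rho>'"
    unfolding ST_B_def n_def by blast
  have dR': "density n \<rho>'" and trP: "tr (PC * \<rho>') = 1" using st by (auto simp: state_in_def)
  have n0: "0 < n" using density_dim_pos[OF dR] .
  have dA: "0 < dA" and dB: "0 < dB" using n0 by (auto simp: n_def)
  have Rc: "\<rho> \<in> carrier_mat n n" and R'c: "\<rho>' \<in> carrier_mat n n" and trR': "tr \<rho>' = 1"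
    using dR dR' by (auto simp: density_def)
  obtain f where f: "\<forall>i<n. \<forall>j<n. \<rho> $$ (i,j) = (\<Sum>k<n. f k i * cnj (f k j))" using cholesky[OF dR] by blast
  obtain g where g: "\<forall>i<n. \<forall>j<n. \<rho>' $$ (i,j) = (\<Sum>k<n. g k i * cnj (g k j))" using cholesky[OF dR'] by blast
  define w where "w k = vec n (g k)" for k
  have w: "w k \<in> carrier_vec n" for k by (simp add: w_def)
  have PC': "orth_proj n PC" using PC by (simp add: n_def)
  have PCw: "PC *\<^sub>v w k = w k" if "k < n" for k
    unfolding w_def using support_in_range[OF PC' dR' trP g that] .
  have wE: "\<exists>u. u \<in> carrier_vec dL \<and> E *\<^sub>v u = w k" if k: "k < n" for k
  proof -
    have "w k \<in> C" unfolding C using PCw[OF k] w[of k] by (auto simp: n_def intro!: exI[of _ "w k"])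
    thus ?thesis using rng by auto
  qed
  define u where "u k = (SOME u. u \<in> carrier_vec dL \<and> E *\<^sub>v u = w k)" for k
  have u: "u k \<in> carrier_vec dL" "E *\<^sub>v u k = w k" if "k < n" for k
    using someI_ex[OF wE[OF that]] by (auto simp: u_def)
  define s where "s = vec (dL*n) (\<lambda>i. u (i mod n) $ (i div n))"
  have sc: "s \<in> carrier_vec (dL*n)" by (simp add: s_def)
  have ipu: "ip (u k) (u k) = ip (w k) (w k)" if k: "k < n" for k
  proof -
    have Eu: "E *\<^sub>v u k \<in> carrier_vec (dA*dB)" using w[of k] u(2)[OF k] by (simp add: n_def)
    have "ip (w k) (w k) = ip (E *\<^sub>v u k) (E *\<^sub>v u k)" using u[OF k] by simp
    also have "\<dots> = ip (u k) (adj E *\<^sub>v (E *\<^sub>v u k))" by (rule ip_adj[OF E u(1)[OF k] Eu])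
    also have "adj E *\<^sub>v (E *\<^sub>v u k) = u k"
      using assoc_mult_mat_vec[OF adj_carrier[OF E] E u(1)[OF k]] iso u(1)[OF k] by simp
    finally show ?thesis by simp
  qed
  have "ip s s = (\<Sum>i<dL*n. s $ i * cnj (s $ i))" using sc by (simp add: ip_def)
  also have "\<dots> = (\<Sum>l<dL. \<Sum>k<n. s $ (l*n+k) * cnj (s $ (l*n+k)))" by (rule sum_split)
  also have "\<dots> = (\<Sum>l<dL. \<Sum>k<n. u k $ l * cnj (u k $ l))"
    by (intro sum.cong refl) (use idx_lt in \<open>auto simp: s_def\<close>)
  also have "\<dots> = (\<Sum>k<n. \<Sum>l<dL. u k $ l * cnj (u k $ l))" by (rule sum.swap)
  also have "\<dots> = (\<Sum>k<n. ip (w k) (w k))"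
  proof (rule sum.cong[OF refl])
    fix k assume "k \<in> {..<n}" hence k: "k < n" by simp
    have "(\<Sum>l<dL. u k $ l * cnj (u k $ l)) = ip (u k) (u k)" using u(1)[OF k] by (simp add: ip_def)
    thus "(\<Sum>l<dL. u k $ l * cnj (u k $ l)) = ip (w k) (w k)" using ipu[OF k] by simp
  qed
  also have "\<dots> = (\<Sum>k<n. \<Sum>i<n. g k i * cnj (g k i))" by (simp add: ip_def w_def)
  also have "\<dots> = (\<Sum>i<n. \<Sum>k<n. g k i * cnj (g k i))" by (rule sum.swap)
  also have "\<dots> = tr \<rho>'" using g R'c by (simp add: tr_def)
  finally have ss: "ip s s = 1" using trR' by simp
  define \<sigma> where "\<sigma> = outer s s"
  have dS: "density (dL*n) \<sigma>" unfolding \<sigma>_def by (rule density_outer[OF sc ss])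
  define \<Phi> where "\<Phi> = vec (n*n) (\<lambda>i. g (i mod n) (i div n))"
  define \<Psi> where "\<Psi> = vec (n*n) (\<lambda>i. f (i mod n) (i div n))"
  have Phc: "\<Phi> \<in> carrier_vec (n*n)" and Psc: "\<Psi> \<in> carrier_vec (n*n)" by (auto simp: \<Phi>_def \<Psi>_def)
  have En: "E \<in> carrier_mat n dL" using E by (simp add: n_def)
  have Fs: "kron E (1\<^sub>m n) *\<^sub>v s = \<Phi>"
  proof (rule eq_vecI)
    fix i assume "i < dim_vec \<Phi>" hence i: "i < n*n" by (simp add: \<Phi>_def)
    have im: "i mod n < n" using n0 by simp
    have id: "i div n < n" using i by (simp add: less_mult_imp_div_less)
    have vu: "vec dL (\<lambda>j. s $ (j*n + i mod n)) = u (i mod n)"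
      by (rule eq_vecI) (use u(1)[OF im] im idx_lt in \<open>auto simp: s_def\<close>)
    have "(kron E (1\<^sub>m n) *\<^sub>v s) $ i = (E *\<^sub>v vec dL (\<lambda>j. s $ (j*n + i mod n))) $ (i div n)"
      by (rule kronE_mult_vec[OF En sc i])
    also have "\<dots> = w (i mod n) $ (i div n)" using vu u(2)[OF im] by simp
    also have "\<dots> = \<Phi> $ i" using id i by (simp add: w_def \<Phi>_def)
    finally show "(kron E (1\<^sub>m n) *\<^sub>v s) $ i = \<Phi> $ i" .
  qed (use En in \<open>auto simp: kron_def \<Phi>_def\<close>)
  have enc: "kron E (1\<^sub>m n) * \<sigma> * adj (kron E (1\<^sub>m n)) = outer \<Phi> \<Phi>"
    unfolding \<sigma>_def using conj_outer[OF kronE_carrier[OF En] sc] Fs by simp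
  define N where "N = dB*n"
  have nN: "n*n = dA*N" by (simp add: N_def n_def)
  define \<phi> where "\<phi> a = vec N (\<lambda>r. \<Phi> $ (a*N + r))" for a
  define \<psi> where "\<psi> a = vec N (\<lambda>r. \<Psi> $ (a*N + r))" for a
  have Ph3: "\<Phi> \<in> carrier_vec (dA*dB*n)" and Ps3: "\<Psi> \<in> carrier_vec (dA*dB*n)"
    using Phc Psc by (auto simp: n_def)
  have gram: "ip (\<phi> a) (\<phi> b) = ip (\<psi> a) (\<psi> b)" if a: "a < dA" and b: "b < dA" for a b
  proof -
    have "ip (\<phi> a) (\<phi> b) = ptrace2 dB (ptrace2 n (outer \<Phi> \<Phi>)) $$ (a,b)"
      unfolding \<phi>_def N_def by (rule gram_ptrace[OF Ph3 dB n0 a b])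
    also have "ptrace2 n (outer \<Phi> \<Phi>) = \<rho>'" unfolding \<Phi>_def by (rule ptrace_outer_chol[OF R'c n0 g])
    also have "ptrace2 dB \<rho>' = ptrace2 dB \<rho>" using eqA by simp
    also have "\<rho> = ptrace2 n (outer \<Psi> \<Psi>)" unfolding \<Psi>_def by (rule ptrace_outer_chol[OF Rc n0 f, symmetric])
    also have "ptrace2 dB (ptrace2 n (outer \<Psi> \<Psi>)) $$ (a,b) = ip (\<psi> a) (\<psi> b)"
      unfolding \<psi>_def N_def by (rule gram_ptrace[OF Ps3 dB n0 a b, symmetric])
    finally show ?thesis .
  qed
  obtain K where K: "K \<in> carrier_mat N N" and Kphi: "\<forall>a<dA. K *\<^sub>v \<phi> a = \<psi> a"
    and proj: "adj K * K * (adj K * K) = adj K * K" and Pphi: "\<forall>a<dA. (adj K * K) *\<^sub>v \<phi> a = \<phi> a"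
    using partial_isometry[of dA \<phi> N \<psi>] gram by (auto simp: \<phi>_def \<psi>_def)
  define Q where "Q = 1\<^sub>m N - adj K * K"
  have kr: "kraus N [K, Q]" unfolding Q_def by (rule proj_compl(1)[OF K proj])
  have Qv: "Q *\<^sub>v x = x - (adj K * K) *\<^sub>v x" if "x \<in> carrier_vec N" for x
    unfolding Q_def by (rule proj_compl(2)[OF K proj that])
  have Qc: "Q \<in> carrier_mat N N" using kr by (simp add: kraus_def)
  have PhN: "\<Phi> \<in> carrier_vec (dA*N)" and PsN: "\<Psi> \<in> carrier_vec (dA*N)" using Phc Psc nN by auto
  have KPhi: "kron (1\<^sub>m dA) K *\<^sub>v \<Phi> = \<Psi>"
    by (rule kron_apply_vec[OF K PhN PsN]) (use Kphi in \<open>simp add: \<phi>_def \<psi>_def\<close>)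
  have QPhi: "kron (1\<^sub>m dA) Q *\<^sub>v \<Phi> = 0\<^sub>v (dA*N)"
  proof (rule kron_apply_vec[OF Qc PhN])
    show "0\<^sub>v (dA*N) \<in> carrier_vec (dA*N)" by simp
    show "\<forall>x<dA. Q *\<^sub>v vec N (\<lambda>r. \<Phi> $ (x*N+r)) = vec N (\<lambda>r. 0\<^sub>v (dA*N) $ (x*N+r))"
    proof (intro allI impI)
      fix x assume x: "x < dA"
      have pc: "\<phi> x \<in> carrier_vec N" by (simp add: \<phi>_def)
      have "Q *\<^sub>v \<phi> x = 0\<^sub>v N" using Qv[OF pc] Pphi x pc by (intro eq_vecI) auto
      thus "Q *\<^sub>v vec N (\<lambda>r. \<Phi> $ (x*N+r)) = vec N (\<lambda>r. 0\<^sub>v (dA*N) $ (x*N+r))"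
        using x idx_lt by (auto simp: \<phi>_def intro!: eq_vecI)
    qed
  qed
  have dimE: "dim_row E = n" using E by (simp add: n_def)
  have AK: "apply_kraus (dim_row E * n) (map (\<lambda>K. kron (1\<^sub>m dA) K) [K, Q]) (outer \<Phi> \<Phi>) = outer \<Psi> \<Psi>"
  proof -
    have c1: "kron (1\<^sub>m dA) K \<in> carrier_mat (n*n) (n*n)" using kron1_carrier[OF K] nN by simp
    have c2: "kron (1\<^sub>m dA) Q \<in> carrier_mat (n*n) (n*n)" using kron1_carrier[OF Qc] nN by simp
    have o1: "kron (1\<^sub>m dA) K * outer \<Phi> \<Phi> * adj (kron (1\<^sub>m dA) K) = outer \<Psi> \<Psi>"
      using conj_outer[OF c1 Phc] KPhi by simp
    have o2: "kron (1\<^sub>m dA) Q * outer \<Phi> \<Phi> * adj (kron (1\<^sub>m dA) Q) = outer (0\<^sub>v (dA*N)) (0\<^sub>v (dA*N))"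
      using conj_outer[OF c2 Phc] QPhi by simp
    show ?thesis
      unfolding apply_kraus_def dimE using o1 o2 Psc nN by (intro eq_matI) auto
  qed
  have "experiment_outcome dA E n \<sigma> [K, Q] = \<rho>"
    unfolding experiment_outcome_def Let_def enc AK unfolding \<Psi>_def by (rule ptrace_outer_chol[OF Rc n0 f])
  moreover have "kraus (dB*n) [K, Q]" using kr by (simp add: N_def)
  ultimately show ?thesis using n0 dS by (intro exI[of _ n] exI[of _ \<sigma>] exI[of _ "[K, Q]"]) auto
qed

theorem mainTheorem11:
  fixes dA dB dL :: nat and C :: "complex vec set" and PC E :: "complex mat"
  assumes "orth_proj (dA*dB) PC"
    and "C = {PC *\<^sub>v v | v. v \<in> carrier_vec (dA*dB)}"
    and "E \<in> carrier_mat (dA*dB) dL"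
    and "adj E * E = 1\<^sub>m dL"
    and "(\<lambda>v. E *\<^sub>v v) ` carrier_vec dL = C"
  shows "{experiment_outcome dA E dX \<sigma> Ks | dX \<sigma> Ks.
            0 < dX \<and> density (dL*dX) \<sigma> \<and> kraus (dB*dX) Ks} = ST_B dA dB PC"
proof
  show "{experiment_outcome dA E dX \<sigma> Ks | dX \<sigma> Ks.
            0 < dX \<and> density (dL*dX) \<sigma> \<and> kraus (dB*dX) Ks} \<subseteq> ST_B dA dB PC"
    using dir1[OF assms] by blast
next
  show "ST_B dA dB PC \<subseteq> {experiment_outcome dA E dX \<sigma> Ks | dX \<sigma> Ks.
            0 < dX \<and> density (dL*dX) \<sigma> \<and> kraus (dB*dX) Ks}"
    using dir2[OF assms] by blast
qed


end
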